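(* Let $f \in \mathbb{Z}[x]$ be a tower-stable polynomial, let $a$ be a positive integer, and let $b$ be an $f$-valid positive integer. Then there exists a sequence of positive integers $(x_n)_{n \ge 1}$ such that for every $n \ge 1$, $$f^{x_n}(a) \equiv x_n \pmod{b^n},$$ and for every $n \ge 2$, $x_n = c_n b^{n-1} + x_{n-1}$ for some integer $c_n$ with $0 \le c_n < b$.
   Context: $f^m$ denotes the $m$-th iterate of $f$. For a positive integer $m$, $f_m : \mathbb{Z}/m\mathbb{Z} \to \mathbb{Z}/m\mathbb{Z}$ denotes the reduction map $x \bmod m \mapsto f(x) \bmod m$. For a self-map $\sigma$ of a finite set $F$ and $y \in F$, the cycle length of $\sigma$ on $y$ is the least $l \ge 1$ such that $\sigma^{k}(y) = \sigma^{k+l}(y)$ for some $k \ge 0$; the period of $\sigma$ is the least common multiple of the cycle lengths of all $y \in F$. Let $\lambda_f(m)$ denote the period of $f_m$. The polynomial $f$ is called tower-stable if for every prime $p$, $f_p$ is not a cyclic permutation of length $p$ (a single cycle through all $p$ elements). A positive integer $b$ is called valid if for every pair of primes $p, q$ with $p \mid b$ and $q \mid p-1$ we have $q \mid b$. A positive integer $b$ is called $f$-valid if $b$ is square-free, valid, and for every pair of primes $p, q$ with $p \mid b$ and $q \mid \lambda_f(p)$ we have $q \mid b$. *)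

theory Defs
  imports "HOL-Computational_Algebra.Polynomial" "HOL-Computational_Algebra.Primes" "HOL-Computational_Algebra.Squarefree" "HOL-Number_Theory.Cong"
begin

(* reduction map f_m on Z/mZ, represented on the residues {0..<m} *)
definition red_map :: "int poly \<Rightarrow> int \<Rightarrow> int \<Rightarrow> int" where
  "red_map f m x = poly f x mod m"

definition residues_set :: "int \<Rightarrow> int set" where
  "residues_set m = {0..<m}"

definition cycle_length :: "('a \<Rightarrow> 'a) \<Rightarrow> 'a \<Rightarrow> nat" where
  "cycle_length \<sigma> y = (LEAST l. l \<ge> 1 \<and> (\<exists>k. (\<sigma> ^^ k) y = (\<sigma> ^^ (k + l)) y))"

definition period :: "('a \<Rightarrow> 'a) \<Rightarrow> 'a set \<Rightarrow> nat" where
  "period \<sigma> F = Lcm (cycle_length \<sigma> ` F)"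

definition lambda_f :: "int poly \<Rightarrow> nat \<Rightarrow> nat" where
  "lambda_f f m = period (red_map f (int m)) (residues_set (int m))"

definition is_full_cycle :: "('a \<Rightarrow> 'a) \<Rightarrow> 'a set \<Rightarrow> bool" where
  "is_full_cycle \<sigma> F = ((\<forall>x\<in>F. \<sigma> x \<in> F) \<and> bij_betw \<sigma> F F \<and>
      (\<forall>x\<in>F. \<forall>y\<in>F. \<exists>k. (\<sigma> ^^ k) x = y))"

definition tower_stable :: "int poly \<Rightarrow> bool" where
  "tower_stable f = (\<forall>p::nat. prime p \<longrightarrow>
      \<not> is_full_cycle (red_map f (int p)) (residues_set (int p)))"

definition valid :: "nat \<Rightarrow> bool" where
  "valid b = (\<forall>p q :: nat. prime p \<longrightarrow> prime q \<longrightarrow> p dvd b \<longrightarrow> q dvd (p - 1) \<longrightarrow> q dvd b)"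

definition f_valid :: "int poly \<Rightarrow> nat \<Rightarrow> bool" where
  "f_valid f b = (squarefree b \<and> valid b \<and>
     (\<forall>p q :: nat. prime p \<longrightarrow> prime q \<longrightarrow> p dvd b \<longrightarrow> q dvd lambda_f f p \<longrightarrow> q dvd b))"

end

theory Submission
  imports Defs "HOL-Number_Theory.Residues"
begin

lemma poly_cong_int:
  fixes f :: "int poly"
  assumes "[x = y] (mod m)"
  shows "[poly f x = poly f y] (mod m)"
proof (induction f)
  case 0
  then show ?case by simp
next
  case (pCons c q)
  then show ?case using assms
    by (simp add: cong_add cong_mult)
qed

lemma iter_cong_int:
  fixes f :: "int poly"
  assumes "[x = y] (mod m)"
  shows "[(poly f ^^ k) x = (poly f ^^ k) y] (mod m)"
  using assms by (induction k) (auto intro: poly_cong_int)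

lemma taylor_poly:
  fixes f :: "int poly"
  shows "h^2 dvd (poly f (w + h) - poly f w - h * poly (pderiv f) w)"
proof (induction f)
  case 0
  then show ?case by simp
next
  case (pCons c q)
  then obtain e where e: "poly q (w + h) - poly q w - h * poly (pderiv q) w = h^2 * e"
    by (auto elim: dvdE)
  have "poly (pCons c q) (w + h) - poly (pCons c q) w - h * poly (pderiv (pCons c q)) w
        = w * (poly q (w + h) - poly q w - h * poly (pderiv q) w) + h * (poly q (w + h) - poly q w)"
    by (simp add: pderiv_pCons algebra_simps)
  also have "\<dots> = h^2 * (w * e + poly (pderiv q) w + h * e)"
    using e by (simp add: algebra_simps power2_eq_square)
  finally show ?case by simp
qed

definition Dr :: "int poly \<Rightarrow> nat \<Rightarrow> int \<Rightarrow> int" where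
  "Dr f k z = (\<Prod>i<k. poly (pderiv f) ((poly f ^^ i) z))"

lemma taylor_iter:
  fixes f :: "int poly"
  shows "h^2 dvd ((poly f ^^ k) (z + h) - (poly f ^^ k) z - h * Dr f k z)"
proof (induction k)
  case 0
  then show ?case by (simp add: Dr_def)
next
  case (Suc k)
  define A where "A = (poly f ^^ k) (z + h)"
  define B where "B = (poly f ^^ k) z"
  from Suc obtain e where e: "A - B - h * Dr f k z = h^2 * e"
    unfolding A_def B_def by (auto elim: dvdE)
  have AB: "A - B = h * (Dr f k z + h * e)" using e by (simp add: algebra_simps power2_eq_square)
  have t: "(A - B)^2 dvd (poly f (B + (A - B)) - poly f B - (A - B) * poly (pderiv f) B)"
    by (rule taylor_poly)
  have h2: "h^2 dvd (A - B)^2" using AB by (simp add: power_mult_distrib)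
  have t2: "h^2 dvd (poly f A - poly f B - (A - B) * poly (pderiv f) B)"
    using dvd_trans[OF h2 t] by simp
  have DS: "Dr f (Suc k) z = Dr f k z * poly (pderiv f) B"
    by (simp add: Dr_def B_def)
  have "poly f A - poly f B - h * Dr f (Suc k) z
      = (poly f A - poly f B - (A - B) * poly (pderiv f) B) + h^2 * e * poly (pderiv f) B"
    using e DS by (simp add: algebra_simps)
  moreover have "h^2 dvd h^2 * e * poly (pderiv f) B" by simp
  ultimately have "h^2 dvd poly f A - poly f B - h * Dr f (Suc k) z"
    using t2 by (metis dvd_add)
  then show ?case by (simp add: A_def B_def)
qed

definition orb :: "int poly \<Rightarrow> int \<Rightarrow> nat \<Rightarrow> int" where
  "orb f a y = (poly f ^^ y) a"

definition Wd :: "int poly \<Rightarrow> int \<Rightarrow> nat \<Rightarrow> nat \<Rightarrow> int" where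
  "Wd f a y M = (\<Prod>i<M. poly (pderiv f) (orb f a (y + i)))"

lemma orb_shift: "(poly f ^^ i) (orb f a y) = orb f a (y + i)"
  by (simp add: orb_def funpow_add add.commute)

lemma Dr_orb: "Dr f M (orb f a y) = Wd f a y M"
  by (simp add: Dr_def Wd_def orb_shift)

lemma orb_Suc: "orb f a (Suc y) = poly f (orb f a y)"
  by (simp add: orb_def)

lemma lift_na:
  fixes p :: int
  assumes "prime p" "k \<ge> 1"
    and per: "\<forall>y\<ge>T. p^k dvd orb f a (y + P) - orb f a y"
    and W1: "\<forall>y\<ge>T. p dvd Wd f a y P - 1"
    and "y \<ge> T"
  shows "p^(k+1) dvd orb f a (y + nat p * P) - orb f a y"
proof -
  define p' where "p' = nat p"
  define z where "z j = orb f a (y + j * P)" for j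
  have zS: "z (Suc j) = (poly f ^^ P) (z j)" for j
    by (simp add: z_def orb_shift algebra_simps)
  have c1: "p^k dvd z j - z 0" for j
  proof (induction j)
    case 0 then show ?case by simp
  next
    case (Suc j)
    have "p^k dvd orb f a ((y + j * P) + P) - orb f a (y + j * P)"
      using per \<open>y \<ge> T\<close> by simp
    then have "p^k dvd z (Suc j) - z j"
      by (simp add: z_def algebra_simps)
    then show ?case using Suc by (metis diff_add_cancel dvd_add add_diff_eq diff_diff_eq2)
  qed
  have kk: "k + 1 \<le> 2 * k" using \<open>k \<ge> 1\<close> by simp
  have c2: "p^(k+1) dvd z (Suc j) - z 1 - (z j - z 0)" for j
  proof -
    define h where "h = z j - z 0"
    have ph: "p^k dvd h" using c1 by (simp add: h_def)
    have "(p^k)^2 dvd h^2" using ph by (simp add: power_mult_distrib dvd_power_same)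
    then have hh: "p^(k+1) dvd h^2"
      using kk by (metis dvd_trans le_imp_power_dvd power_mult mult.commute)
    have t: "h^2 dvd (poly f ^^ P) (z 0 + h) - (poly f ^^ P) (z 0) - h * Dr f P (z 0)"
      by (rule taylor_iter)
    have D: "Dr f P (z 0) = Wd f a y P" by (simp add: z_def Dr_orb)
    have "p dvd Wd f a y P - 1" using W1 \<open>y \<ge> T\<close> by simp
    then have "p^k * p dvd h * (Wd f a y P - 1)"
      using mult_dvd_mono[OF ph] by blast
    then have "p^(k+1) dvd h * (Dr f P (z 0) - 1)"
      using D by (simp add: mult.commute)
    moreover have "z (Suc j) - z 1 - (z j - z 0) =
       ((poly f ^^ P) (z 0 + h) - (poly f ^^ P) (z 0) - h * Dr f P (z 0)) + h * (Dr f P (z 0) - 1)"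
      by (simp add: zS h_def algebra_simps)
    ultimately show ?thesis using dvd_trans[OF hh t] by (metis dvd_add)
  qed
  have c3: "p^(k+1) dvd z j - z 0 - int j * (z 1 - z 0)" for j
  proof (induction j)
    case 0 then show ?case by simp
  next
    case (Suc j)
    have "z (Suc j) - z 0 - int (Suc j) * (z 1 - z 0) =
      (z (Suc j) - z 1 - (z j - z 0)) + (z j - z 0 - int j * (z 1 - z 0))"
      by (simp add: algebra_simps)
    then show ?case using Suc c2[of j] by (metis dvd_add)
  qed
  have "p^(k+1) dvd p * (z 1 - z 0)"
    using c1[of 1] by (simp add: mult_dvd_mono)
  moreover have "int p' = p" using \<open>prime p\<close> by (simp add: prime_ge_0_int p'_def)
  ultimately have "p^(k+1) dvd z p' - z 0" using c3[of p'] by (metis dvd_add diff_add_cancel)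
  then show ?thesis by (simp add: z_def p'_def)
qed

lemma lift_at:
  fixes p :: int
  assumes "k \<ge> 1"
    and per: "\<forall>y\<ge>T. p^k dvd orb f a (y + L) - orb f a y"
    and W0: "\<forall>y\<ge>T. p dvd Wd f a y L"
    and "y \<ge> T + L"
  shows "p^(k+1) dvd orb f a (y + L) - orb f a y"
proof -
  define y' where "y' = y - L"
  have y': "y' \<ge> T" "y = y' + L" using assms(4) by (auto simp: y'_def)
  define z0 where "z0 = orb f a y'"
  define h where "h = orb f a y - z0"
  have ph: "p^k dvd h" using per y' by (simp add: h_def z0_def)
  have kk: "k + 1 \<le> 2 * k" using \<open>k \<ge> 1\<close> by simp
  have "(p^k)^2 dvd h^2" using ph by (simp add: power_mult_distrib dvd_power_same)
  then have hh: "p^(k+1) dvd h^2"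
    using kk by (metis dvd_trans le_imp_power_dvd power_mult mult.commute)
  have t: "h^2 dvd (poly f ^^ L) (z0 + h) - (poly f ^^ L) z0 - h * Dr f L z0"
    by (rule taylor_iter)
  have D: "Dr f L z0 = Wd f a y' L" by (simp add: z0_def Dr_orb)
  have "p dvd Wd f a y' L" using W0 y' by simp
  then have "p^k * p dvd h * Wd f a y' L"
    using mult_dvd_mono[OF ph] by blast
  then have "p^(k+1) dvd h * Dr f L z0"
    using D by (simp add: mult.commute)
  moreover have "orb f a (y + L) - orb f a y =
     ((poly f ^^ L) (z0 + h) - (poly f ^^ L) z0 - h * Dr f L z0) + h * Dr f L z0"
    by (simp add: h_def z0_def orb_shift y')
  ultimately show ?thesis using dvd_trans[OF hh t] by (metis dvd_add)
qed

lemma fp_add: "(\<sigma> ^^ m) ((\<sigma> ^^ n) x) = (\<sigma> ^^ (m + n)) x"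
  by (simp add: funpow_add)

lemma red_iter:
  "(red_map f m ^^ k) (a mod m) = orb f a k mod m"
proof (induction k)
  case 0 then show ?case by (simp add: orb_def)
next
  case (Suc k)
  have "(red_map f m ^^ Suc k) (a mod m) = red_map f m (orb f a k mod m)"
    using Suc.IH by simp
  also have "\<dots> = poly f (orb f a k mod m) mod m" by (simp add: red_map_def)
  also have "\<dots> = poly f (orb f a k) mod m"
    using poly_cong_int[of "orb f a k mod m" "orb f a k" m f] by (simp add: cong_def)
  finally show ?case by (simp add: orb_Suc)
qed

lemma cycle_exists:
  fixes \<sigma> :: "'a \<Rightarrow> 'a"
  assumes fin: "finite F" and cl: "\<forall>x\<in>F. \<sigma> x \<in> F" and y0: "y0 \<in> F"
  shows "\<exists>i j. i < j \<and> j \<le> card F \<and> (\<sigma> ^^ i) y0 = (\<sigma> ^^ j) y0"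
proof -
  have inF: "(\<sigma> ^^ k) y0 \<in> F" for k
    by (induction k) (use y0 cl in auto)
  have "\<not> inj_on (\<lambda>k. (\<sigma> ^^ k) y0) {0..card F}"
  proof
    assume "inj_on (\<lambda>k. (\<sigma> ^^ k) y0) {0..card F}"
    then have "card {0..card F} \<le> card F"
      using card_inj_on_le[of _ "{0..card F}" F] inF fin by auto
    then show False by simp
  qed
  then obtain i j where ij: "i \<le> card F" "j \<le> card F" "i \<noteq> j" "(\<sigma> ^^ i) y0 = (\<sigma> ^^ j) y0"
    unfolding inj_on_def by auto
  show ?thesis
  proof (cases "i < j")
    case True then show ?thesis using ij by auto
  next
    case False then show ?thesis using ij by (intro exI[of _ j] exI[of _ i]) auto
  qed
qed

lemma cl_props:
  fixes \<sigma> :: "'a \<Rightarrow> 'a"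
  assumes fin: "finite F" and cl: "\<forall>x\<in>F. \<sigma> x \<in> F" and y0: "y0 \<in> F"
  shows "cycle_length \<sigma> y0 \<ge> 1" "cycle_length \<sigma> y0 \<le> card F"
    "\<exists>k. (\<sigma> ^^ k) y0 = (\<sigma> ^^ (k + cycle_length \<sigma> y0)) y0"
proof -
  obtain i j where ij: "i < j" "j \<le> card F" "(\<sigma> ^^ i) y0 = (\<sigma> ^^ j) y0"
    using cycle_exists[OF assms] by blast
  define P where "P l = (l \<ge> 1 \<and> (\<exists>k. (\<sigma> ^^ k) y0 = (\<sigma> ^^ (k + l)) y0))" for l
  have Pw: "P (j - i)" unfolding P_def using ij by (intro conjI exI[of _ i]) auto
  have cdef: "cycle_length \<sigma> y0 = (LEAST l. P l)" by (simp add: cycle_length_def P_def)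
  have "P (cycle_length \<sigma> y0)" unfolding cdef by (rule LeastI[of P, OF Pw])
  then show "cycle_length \<sigma> y0 \<ge> 1" "\<exists>k. (\<sigma> ^^ k) y0 = (\<sigma> ^^ (k + cycle_length \<sigma> y0)) y0"
    by (auto simp: P_def)
  have "cycle_length \<sigma> y0 \<le> j - i" unfolding cdef by (rule Least_le[of P, OF Pw])
  then show "cycle_length \<sigma> y0 \<le> card F" using ij by simp
qed

lemma periodic_from:
  fixes \<sigma> :: "'a \<Rightarrow> 'a"
  assumes "(\<sigma> ^^ k) y0 = (\<sigma> ^^ (k + l)) y0" "y \<ge> k"
  shows "(\<sigma> ^^ (y + l)) y0 = (\<sigma> ^^ y) y0"
proof -
  obtain d where d: "y = k + d" using assms(2) le_Suc_ex by blast
  have "(\<sigma> ^^ (y + l)) y0 = (\<sigma> ^^ d) ((\<sigma> ^^ (k + l)) y0)"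
    by (simp add: fp_add d algebra_simps)
  also have "\<dots> = (\<sigma> ^^ d) ((\<sigma> ^^ k) y0)" using assms(1) by simp
  also have "\<dots> = (\<sigma> ^^ y) y0" by (simp add: fp_add d algebra_simps)
  finally show ?thesis .
qed

lemma full_cycle_if:
  fixes \<sigma> :: "'a \<Rightarrow> 'a"
  assumes fin: "finite F" and cl: "\<forall>x\<in>F. \<sigma> x \<in> F" and y0: "y0 \<in> F"
    and eq: "cycle_length \<sigma> y0 = card F"
  shows "is_full_cycle \<sigma> F"
proof -
  define n where "n = card F"
  obtain k0 where k0: "(\<sigma> ^^ k0) y0 = (\<sigma> ^^ (k0 + n)) y0"
    using cl_props(3)[OF assms(1-3)] eq n_def by auto
  have n1: "n \<ge> 1" using cl_props(1)[OF assms(1-3)] eq n_def by simp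
  define u where "u = (\<sigma> ^^ k0) y0"
  have inF: "(\<sigma> ^^ k) x \<in> F" if "x \<in> F" for k x
    by (induction k) (use that cl in auto)
  have uF: "u \<in> F" using inF y0 u_def by simp
  have un1: "(\<sigma> ^^ n) u = (\<sigma> ^^ (k0 + n)) y0" by (simp add: u_def fp_add add.commute)
  have un: "(\<sigma> ^^ n) u = u" using un1 k0 u_def by metis
  have dist: "(\<sigma> ^^ i) u \<noteq> (\<sigma> ^^ j) u" if "i < j" "j < n" for i j
  proof
    assume e: "(\<sigma> ^^ i) u = (\<sigma> ^^ j) u"
    have "(\<sigma> ^^ (k0 + i)) y0 = (\<sigma> ^^ ((k0 + i) + (j - i))) y0"
      using e that by (simp add: u_def fp_add algebra_simps)
    then have "cycle_length \<sigma> y0 \<le> j - i"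
      unfolding cycle_length_def using that by (intro Least_le) (intro conjI exI[of _ "k0 + i"]; simp)
    then show False using that eq n_def by simp
  qed
  have inj: "inj_on (\<lambda>i. (\<sigma> ^^ i) u) {..<n}"
    unfolding inj_on_def
    by (metis dist lessThan_iff linorder_neqE_nat)
  have sub: "(\<lambda>i. (\<sigma> ^^ i) u) ` {..<n} \<subseteq> F" using inF uF by auto
  have cardeq: "card ((\<lambda>i. (\<sigma> ^^ i) u) ` {..<n}) = card F"
    using card_image[OF inj] n_def by simp
  have allF: "F = (\<lambda>i. (\<sigma> ^^ i) u) ` {..<n}"
    using card_subset_eq[OF fin sub cardeq] by simp
  have surj: "F \<subseteq> \<sigma> ` F"
  proof
    fix x assume "x \<in> F"
    then have "x \<in> (\<lambda>i. (\<sigma> ^^ i) u) ` {..<n}" using allF by simp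
    then obtain i where i: "i < n" "x = (\<sigma> ^^ i) u" by auto
    show "x \<in> \<sigma> ` F"
    proof (cases i)
      case 0
      have "x = \<sigma> ((\<sigma> ^^ (n - 1)) u)" using i 0 un n1
        by (metis Suc_diff_1 funpow.simps(2) funpow_0 less_le_trans o_apply zero_less_one)
      then show ?thesis using inF uF by auto
    next
      case (Suc i')
      then have "x = \<sigma> ((\<sigma> ^^ i') u)" using i by simp
      then show ?thesis using inF uF by auto
    qed
  qed
  have img: "\<sigma> ` F = F" using surj cl by auto
  have "inj_on \<sigma> F" using finite_surj_inj[OF fin surj] .
  then have bij: "bij_betw \<sigma> F F" using img by (simp add: bij_betw_def)
  have trans: "\<exists>k. (\<sigma> ^^ k) x = y" if "x \<in> F" "y \<in> F" for x y
  proof -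
    have "x \<in> (\<lambda>i. (\<sigma> ^^ i) u) ` {..<n}" "y \<in> (\<lambda>i. (\<sigma> ^^ i) u) ` {..<n}"
      using allF that by simp_all
    then obtain i j where i: "i < n" "x = (\<sigma> ^^ i) u" and j: "j < n" "y = (\<sigma> ^^ j) u" by auto
    have "(\<sigma> ^^ (j + n - i)) x = (\<sigma> ^^ j) ((\<sigma> ^^ n) u)"
      using i by (simp add: fp_add)
    then show ?thesis using un j by auto
  qed
  show ?thesis unfolding is_full_cycle_def using cl bij trans by blast
qed

lemma dvd_diff_trans:
  fixes m :: int
  assumes "m dvd a - b" "m dvd b - c"
  shows "m dvd a - c"
proof -
  have "a - c = (a - b) + (b - c)" by simp
  then show ?thesis using assms dvd_add by metis
qed

lemma per_mult:
  assumes "\<forall>y\<ge>T. m dvd orb f a (y + L) - orb f a y" "y \<ge> T"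
  shows "m dvd orb f a (y + j * L) - orb f a y"
proof (induction j)
  case 0 then show ?case by simp
next
  case (Suc j)
  have "m dvd orb f a ((y + j * L) + L) - orb f a (y + j * L)" using assms by simp
  then have "m dvd orb f a (y + Suc j * L) - orb f a (y + j * L)" by (simp add: algebra_simps)
  then show ?case using Suc dvd_diff_trans by blast
qed

lemma per_mult_cong:
  assumes "\<forall>y\<ge>T. m dvd orb f a (y + L) - orb f a y" "y \<ge> T" "y' \<ge> T" "[y = y'] (mod L)"
  shows "m dvd orb f a y - orb f a y'"
proof -
  { fix u v assume uv: "u \<ge> T" "u \<le> v" "[u = v] (mod L)"
    have "[v = u] (mod L)" using uv(3) by (simp add: cong_sym_eq)
    then have "\<exists>q. v = q * L + u" using cong_le_nat[of u v L] uv(2) by blast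
    then obtain j where "v = j * L + u" by blast
    then have "v = u + j * L" by simp
    then have "m dvd orb f a v - orb f a u" using per_mult[OF assms(1) uv(1), of j]
      by simp }
  note * = this
  show ?thesis
  proof (cases "y \<le> y'")
    case True
    then have "m dvd orb f a y' - orb f a y" using *[of y y'] assms by simp
    then show ?thesis by (simp add: dvd_diff_commute)
  next
    case False then show ?thesis using *[of y' y] assms by (simp add: cong_sym)
  qed
qed

lemma Wd_add: "Wd f a y (M + N) = Wd f a y M * Wd f a (y + M) N"
  by (induction N) (simp_all add: Wd_def algebra_simps)

lemma fermat_int:
  fixes p :: nat and x :: int
  assumes "prime p" "\<not> int p dvd x"
  shows "int p dvd x ^ (p - 1) - 1"
proof -
  define y where "y = nat (x mod int p)"
  have pp: "int p > 0" using assms prime_gt_0_nat by simp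
  have yx: "int y = x mod int p" using pp by (simp add: y_def)
  have "\<not> p dvd y"
  proof
    assume "p dvd y"
    then have "int p dvd int y" by simp
    then have "int p dvd x mod int p" using yx by simp
    then show False using assms(2) by (simp add: dvd_mod_iff)
  qed
  then have "[y ^ (p - 1) = 1] (mod p)" using fermat_theorem assms(1) by blast
  then have "[int (y ^ (p - 1)) = int 1] (mod int p)" using cong_int_iff by blast
  then have c1: "[int y ^ (p - 1) = 1] (mod int p)" by simp
  have c2: "[x ^ (p - 1) = int y ^ (p - 1)] (mod int p)"
    using yx by (intro cong_pow) (simp add: cong_def)
  have "[x ^ (p - 1) = 1] (mod int p)" using cong_trans[OF c2 c1] .
  then show ?thesis by (simp add: cong_iff_dvd_diff dvd_diff_commute)
qed

lemma modp_cycle: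
  fixes p :: nat
  assumes ts: "tower_stable f" and fv: "f_valid f b" and p: "prime p" and pb: "p dvd b"
  obtains l T where "0 < l" "l < p" "\<forall>q. prime q \<longrightarrow> q dvd l \<longrightarrow> q dvd b"
    "\<forall>y\<ge>T. int p dvd orb f a (y + l) - orb f a y"
proof -
  define \<sigma> where "\<sigma> = red_map f (int p)"
  define F where "F = residues_set (int p)"
  have pp: "int p > 0" using p prime_gt_0_nat by simp
  have fin: "finite F" by (simp add: F_def residues_set_def)
  have cardF: "card F = p" by (simp add: F_def residues_set_def)
  have cl: "\<forall>x\<in>F. \<sigma> x \<in> F" using pp by (simp add: F_def residues_set_def \<sigma>_def red_map_def)
  define y0 where "y0 = a mod int p"
  have y0: "y0 \<in> F" using pp by (simp add: F_def residues_set_def y0_def)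
  define l where "l = cycle_length \<sigma> y0"
  have l1: "l \<ge> 1" and lp: "l \<le> p" using cl_props[OF fin cl y0] cardF by (auto simp: l_def)
  obtain k0 where k0: "(\<sigma> ^^ k0) y0 = (\<sigma> ^^ (k0 + l)) y0"
    using cl_props(3)[OF fin cl y0] by (auto simp: l_def)
  have lnp: "l \<noteq> p"
  proof
    assume "l = p"
    then have "is_full_cycle \<sigma> F" using full_cycle_if[OF fin cl y0] cardF by (simp add: l_def)
    then show False using ts p by (simp add: tower_stable_def \<sigma>_def F_def)
  qed
  have ldvd: "l dvd lambda_f f p"
    unfolding lambda_f_def period_def l_def \<sigma>_def[symmetric] F_def[symmetric]
    using y0 by (intro dvd_Lcm) auto
  have qb: "\<forall>q. prime q \<longrightarrow> q dvd l \<longrightarrow> q dvd b"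
  proof (intro allI impI)
    fix q :: nat assume q: "prime q" "q dvd l"
    then have "q dvd lambda_f f p" using ldvd dvd_trans by blast
    then show "q dvd b" using fv p pb q(1) unfolding f_valid_def by blast
  qed
  have per: "\<forall>y\<ge>k0. int p dvd orb f a (y + l) - orb f a y"
  proof (intro allI impI)
    fix y assume "y \<ge> k0"
    then have "(\<sigma> ^^ (y + l)) y0 = (\<sigma> ^^ y) y0" using periodic_from[OF k0] by blast
    then have "orb f a (y + l) mod int p = orb f a y mod int p"
      using red_iter[where f=f and m="int p" and a=a] by (simp add: \<sigma>_def y0_def)
    then show "int p dvd orb f a (y + l) - orb f a y" by (simp add: mod_eq_dvd_iff)
  qed
  show ?thesis using that[of l k0] l1 lp lnp qb per by simp
qed


lemma Wd_cong:
  assumes per1: "\<forall>y\<ge>T. m dvd orb f a (y + l) - orb f a y" and "y \<ge> T"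
  shows "[Wd f a (y + j * l) l = Wd f a y l] (mod m)"
  unfolding Wd_def
proof (rule cong_prod)
  fix i assume "i \<in> {..<l}"
  have "m dvd orb f a ((y + i) + j * l) - orb f a (y + i)"
    using per_mult[OF per1] assms(2) by simp
  then have "[orb f a (y + j * l + i) = orb f a (y + i)] (mod m)"
    by (simp add: cong_iff_dvd_diff algebra_simps)
  then show "[poly (pderiv f) (orb f a (y + j * l + i)) = poly (pderiv f) (orb f a (y + i))] (mod m)"
    by (rule poly_cong_int)
qed

lemma Wd_pow:
  assumes per1: "\<forall>y\<ge>T. m dvd orb f a (y + l) - orb f a y" and "y \<ge> T"
  shows "[Wd f a y (l * j) = (Wd f a y l) ^ j] (mod m)"
proof (induction j)
  case 0 then show ?case by (simp add: Wd_def)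
next
  case (Suc j)
  have "Wd f a y (l * Suc j) = Wd f a y (l * j) * Wd f a (y + j * l) l"
    using Wd_add[of f a y "l * j" l] by (simp add: algebra_simps)
  moreover have "[Wd f a y (l * j) * Wd f a (y + j * l) l = Wd f a y l ^ j * Wd f a y l] (mod m)"
    using Suc Wd_cong[OF per1 assms(2)] by (intro cong_mult)
  ultimately show ?case by (simp add: mult.commute)
qed

lemma Wd_shift_id:
  "Wd f a (Suc y) l * poly (pderiv f) (orb f a y) = Wd f a y l * poly (pderiv f) (orb f a (y + l))"
proof -
  have "Wd f a y (1 + l) = Wd f a y 1 * Wd f a (y + 1) l" by (rule Wd_add)
  moreover have "Wd f a y (l + 1) = Wd f a y l * Wd f a (y + l) 1" by (rule Wd_add)
  ultimately show ?thesis by (simp add: Wd_def algebra_simps)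
qed

lemma iter_pcompose:
  fixes f :: "int poly"
  shows "poly (((\<lambda>q. pcompose f q) ^^ k) [:0, 1:]) x = (poly f ^^ k) x"
  by (induction k) (simp_all add: poly_pcompose pCons_one)

lemma spec_at:
  fixes p :: nat
  assumes p: "prime p" and per1: "\<forall>y\<ge>T0. int p dvd orb f a (y + l) - orb f a y"
    and l1: "l \<ge> 1" and y1: "y1 \<ge> T0" "int p dvd Wd f a y1 l"
  shows "\<forall>n\<ge>1. \<forall>y\<ge>y1 + n * l. int p ^ n dvd orb f a (y + l * j) - orb f a y"
    and "\<exists>R. R \<noteq> 0 \<and> (\<forall>n\<ge>1. \<forall>Y\<ge>y1 + n * l.
            int p ^ n dvd orb f a Y - int Y \<longrightarrow> int p ^ n dvd poly R (int Y))"
proof -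
  have pi: "prime (int p)" using p by simp
  have W0: "int p dvd Wd f a y l" if "y \<ge> y1" for y
    using that
  proof (induction y rule: dec_induct)
    case base then show ?case using y1 by simp
  next
    case (step y)
    have "int p dvd Wd f a y l * poly (pderiv f) (orb f a (y + l))"
      using step.IH by simp
    then have d: "int p dvd Wd f a (Suc y) l * poly (pderiv f) (orb f a y)"
      using Wd_shift_id[of f a y l] by simp
    have cyl: "[orb f a (y + l) = orb f a y] (mod int p)"
      using per1 step.hyps y1(1) by (simp add: cong_iff_dvd_diff)
    have last: "Wd f a (Suc y) l = Wd f a (Suc y) (l - 1) * poly (pderiv f) (orb f a (y + l))"
      using Wd_add[of f a "Suc y" "l - 1" 1] l1 by (simp add: Wd_def)
    show ?case
    proof (cases "int p dvd poly (pderiv f) (orb f a y)")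
      case True
      have "[poly (pderiv f) (orb f a (y + l)) = poly (pderiv f) (orb f a y)] (mod int p)"
        using cyl by (rule poly_cong_int)
      then have "int p dvd poly (pderiv f) (orb f a (y + l))"
        using True by (simp add: cong_dvd_iff)
      then show ?thesis using last by simp
    next
      case False
      then show ?thesis using d pi by (simp add: prime_dvd_mult_iff)
    qed
  qed
  have LA: "\<forall>y\<ge>y1 + (n - 1) * l. int p ^ n dvd orb f a (y + l) - orb f a y" if "n \<ge> 1" for n
    using that
  proof (induction n rule: nat_induct_at_least)
    case base then show ?case using per1 y1(1) by auto
  next
    case (Suc n)
    show ?case
    proof (intro allI impI)
      fix y assume y: "y1 + (Suc n - 1) * l \<le> y"
      have "int p ^ (n + 1) dvd orb f a (y + l) - orb f a y"
      proof (rule lift_at[where T = "y1 + (n - 1) * l"])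
        show "1 \<le> n" using Suc by simp
        show "\<forall>y\<ge>y1 + (n - 1) * l. int p ^ n dvd orb f a (y + l) - orb f a y" using Suc.IH .
        show "\<forall>y\<ge>y1 + (n - 1) * l. int p dvd Wd f a y l" using W0 by auto
        have "(n - 1) * l + l = n * l" using Suc.hyps by (cases n) auto
        then show "y1 + (n - 1) * l + l \<le> y" using y by simp
      qed
      then show "int p ^ Suc n dvd orb f a (y + l) - orb f a y" by simp
    qed
  qed
  show "\<forall>n\<ge>1. \<forall>y\<ge>y1 + n * l. int p ^ n dvd orb f a (y + l * j) - orb f a y"
  proof (intro allI impI)
    fix n y assume n: "n \<ge> 1" and y: "y \<ge> y1 + n * l"
    have "(n - 1) * l \<le> n * l" by (simp add: mult_le_mono1)
    then have "y \<ge> y1 + (n - 1) * l" using y by linarith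
    then show "int p ^ n dvd orb f a (y + l * j) - orb f a y"
      using per_mult[OF LA[OF n], of y j] by (simp add: mult.commute)
  qed
  define Fl where "Fl = ((\<lambda>q. pcompose f q) ^^ l) [:0, 1:]"
  define R where "R = Fl - [:0, 1:]"
  have polyR: "poly R x = (poly f ^^ l) x - x" for x
    by (simp add: R_def Fl_def iter_pcompose)
  have "R \<noteq> 0"
  proof
    assume "R = 0"
    then have id: "(poly f ^^ l) x = x" for x using polyR[of x] by simp
    define z where "z = orb f a y1"
    have "(int p)^2 dvd (poly f ^^ l) (z + int p) - (poly f ^^ l) z - int p * Dr f l z"
      by (rule taylor_iter)
    then have "int p * int p dvd int p * (1 - Dr f l z)"
      by (simp add: id power2_eq_square algebra_simps)
    then have "int p dvd 1 - Dr f l z" using pi by (simp add: prime_gt_0_int)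
    moreover have "int p dvd Dr f l z" using y1(2) by (simp add: z_def Dr_orb)
    ultimately have "int p dvd (1 - Dr f l z) + Dr f l z" by (rule dvd_add)
    then have "int p dvd 1" by simp
    then show False using pi by (simp add: prime_int_iff)
  qed
  moreover have "\<forall>n\<ge>1. \<forall>Y\<ge>y1 + n * l.
            int p ^ n dvd orb f a Y - int Y \<longrightarrow> int p ^ n dvd poly R (int Y)"
  proof (intro allI impI)
    fix n Y assume n: "n \<ge> 1" and Y: "Y \<ge> y1 + n * l" and d: "int p ^ n dvd orb f a Y - int Y"
    have "(n - 1) * l \<le> n * l" by (simp add: mult_le_mono1)
    then have Y': "Y \<ge> y1 + (n - 1) * l" using Y by linarith
    have c1: "[(poly f ^^ l) (int Y) = (poly f ^^ l) (orb f a Y)] (mod int p ^ n)"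
      using d by (intro iter_cong_int) (simp add: cong_iff_dvd_diff dvd_diff_commute)
    have c2: "[orb f a (Y + l) = orb f a Y] (mod int p ^ n)"
      using LA[OF n] Y' by (simp add: cong_iff_dvd_diff)
    have c3: "[orb f a Y = int Y] (mod int p ^ n)" using d by (simp add: cong_iff_dvd_diff)
    have "[(poly f ^^ l) (int Y) = int Y] (mod int p ^ n)"
      using cong_trans[OF cong_trans[OF c1[unfolded orb_shift] c2] c3] .
    then show "int p ^ n dvd poly R (int Y)" by (simp add: polyR cong_iff_dvd_diff)
  qed
  ultimately show "\<exists>R. R \<noteq> 0 \<and> (\<forall>n\<ge>1. \<forall>Y\<ge>y1 + n * l.
            int p ^ n dvd orb f a Y - int Y \<longrightarrow> int p ^ n dvd poly R (int Y))" by blast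
qed

lemma spec_na:
  fixes p :: nat
  assumes p: "prime p" and per1: "\<forall>y\<ge>T0. int p dvd orb f a (y + l) - orb f a y"
    and nz: "\<forall>y\<ge>T0. \<not> int p dvd Wd f a y l"
  shows "\<forall>n\<ge>1. \<forall>y\<ge>T0. int p ^ n dvd orb f a (y + l * (p - 1) * p ^ (n - 1)) - orb f a y"
proof (rule allI, rule impI)
  fix n :: nat assume "n \<ge> 1"
  then show "\<forall>y\<ge>T0. int p ^ n dvd orb f a (y + l * (p - 1) * p ^ (n - 1)) - orb f a y"
  proof (induction n rule: nat_induct_at_least)
    case base
    show ?case
    proof (intro allI impI)
      fix y assume "y \<ge> T0"
      then show "int p ^ 1 dvd orb f a (y + l * (p - 1) * p ^ (1 - 1)) - orb f a y"
        using per_mult[OF per1, of y "p - 1"] by (simp add: mult.commute)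
    qed
  next
    case (Suc n)
    define P where "P = l * (p - 1) * p ^ (n - 1)"
    have W1: "\<forall>y\<ge>T0. int p dvd Wd f a y P - 1"
    proof (intro allI impI)
      fix y assume y: "y \<ge> T0"
      have c1: "[Wd f a y (l * ((p - 1) * p ^ (n - 1))) = (Wd f a y l) ^ ((p - 1) * p ^ (n - 1))] (mod int p)"
        using Wd_pow[OF per1 y] .
      have "int p dvd (Wd f a y l) ^ (p - 1) - 1" using fermat_int[OF p] nz y by blast
      then have "[(Wd f a y l) ^ (p - 1) = 1] (mod int p)" by (simp add: cong_iff_dvd_diff)
      then have "[((Wd f a y l) ^ (p - 1)) ^ (p ^ (n - 1)) = 1 ^ (p ^ (n - 1))] (mod int p)"
        by (rule cong_pow)
      then have c2: "[(Wd f a y l) ^ ((p - 1) * p ^ (n - 1)) = 1] (mod int p)"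
        by (simp add: power_mult)
      have "[Wd f a y P = 1] (mod int p)"
        using cong_trans[OF c1 c2] by (simp add: P_def mult.assoc)
      then show "int p dvd Wd f a y P - 1" by (simp add: cong_iff_dvd_diff)
    qed
    show ?case
    proof (intro allI impI)
      fix y assume y: "y \<ge> T0"
      have pr: "prime (int p)" using p by simp
      have n1: "1 \<le> n" using Suc by simp
      have per: "\<forall>y\<ge>T0. int p ^ n dvd orb f a (y + P) - orb f a y" using Suc.IH by (simp add: P_def)
      have "int p ^ (n + 1) dvd orb f a (y + nat (int p) * P) - orb f a y"
        using lift_na[where p="int p" and k=n and T=T0 and f=f and a=a and P=P and y=y, OF pr n1 per W1 y] .
      moreover have "nat (int p) * P = l * (p - 1) * p ^ (Suc n - 1)"
        using Suc.hyps by (cases n) (simp_all add: P_def algebra_simps)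
      ultimately show "int p ^ Suc n dvd orb f a (y + l * (p - 1) * p ^ (Suc n - 1)) - orb f a y"
        by simp
    qed
  qed
qed

lemma prime_spec:
  fixes p :: nat
  assumes ts: "tower_stable f" and fv: "f_valid f b" and p: "prime p" and pb: "p dvd b"
  shows "\<exists>Qp T B. Qp > 0 \<and> (\<forall>q. prime q \<longrightarrow> q dvd Qp \<longrightarrow> q < p \<and> q dvd b) \<and>
     (\<forall>n\<ge>1. \<forall>y\<ge>T + n * B. int p ^ n dvd orb f a (y + Qp * p ^ (n - 1)) - orb f a y) \<and>
     (B = 0 \<or> (\<exists>R. R \<noteq> 0 \<and> (\<forall>n\<ge>1. \<forall>Y\<ge>T + n * B.
          int p ^ n dvd orb f a Y - int Y \<longrightarrow> int p ^ n dvd poly R (int Y))))"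
proof -
  obtain l T0 where l0: "0 < l" and lp: "l < p" and lq: "\<forall>q. prime q \<longrightarrow> q dvd l \<longrightarrow> q dvd b"
    and per1: "\<forall>y\<ge>T0. int p dvd orb f a (y + l) - orb f a y"
    using modp_cycle[OF ts fv p pb, of a] by blast
  define Qp where "Qp = l * (p - 1)"
  have p2: "p \<ge> 2" using p prime_ge_2_nat by blast
  have Qp0: "Qp > 0" using l0 p2 by (simp add: Qp_def)
  have vb: "valid b" using fv by (simp add: f_valid_def)
  have Qq: "\<forall>q. prime q \<longrightarrow> q dvd Qp \<longrightarrow> q < p \<and> q dvd b"
  proof (intro allI impI)
    fix q :: nat assume q: "prime q" "q dvd Qp"
    then have "q dvd l \<or> q dvd (p - 1)" by (simp add: Qp_def prime_dvd_mult_iff)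
    then show "q < p \<and> q dvd b"
    proof
      assume "q dvd l"
      then have "q \<le> l" using dvd_imp_le[of q l] l0 by blast
      then have "q < p" using lp by linarith
      moreover have "q dvd b" using lq q(1) \<open>q dvd l\<close> by blast
      ultimately show ?thesis by blast
    next
      assume h: "q dvd (p - 1)"
      then have "q \<le> p - 1" using dvd_imp_le[of q "p - 1"] p2 by simp
      then have "q < p" using p2 by simp
      moreover have "q dvd b"
      proof -
        have "\<forall>p q :: nat. prime p \<longrightarrow> prime q \<longrightarrow> p dvd b \<longrightarrow> q dvd (p - 1) \<longrightarrow> q dvd b"
          using vb unfolding valid_def .
        then show ?thesis using p q(1) pb h by blast
      qed
      ultimately show ?thesis by simp
    qed
  qed
  show ?thesis
  proof (cases "\<exists>y1\<ge>T0. int p dvd Wd f a y1 l")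
    case True
    then obtain y1 where y1: "y1 \<ge> T0" "int p dvd Wd f a y1 l" by blast
    have l1: "l \<ge> 1" using l0 by simp
    have A: "\<forall>n\<ge>1. \<forall>y\<ge>y1 + n * l. int p ^ n dvd orb f a (y + Qp * p ^ (n - 1)) - orb f a y"
    proof (intro allI impI)
      fix n y assume "n \<ge> (1::nat)" "y \<ge> y1 + n * l"
      then have "int p ^ n dvd orb f a (y + l * ((p - 1) * p ^ (n - 1))) - orb f a y"
        using spec_at(1)[OF p per1 l1 y1, of "(p - 1) * p ^ (n - 1)"] by blast
      moreover have "l * ((p - 1) * p ^ (n - 1)) = Qp * p ^ (n - 1)" by (simp add: Qp_def)
      ultimately show "int p ^ n dvd orb f a (y + Qp * p ^ (n - 1)) - orb f a y" by metis
    qed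
    have R: "\<exists>R. R \<noteq> 0 \<and> (\<forall>n\<ge>1. \<forall>Y\<ge>y1 + n * l.
          int p ^ n dvd orb f a Y - int Y \<longrightarrow> int p ^ n dvd poly R (int Y))"
      using spec_at(2)[OF p per1 l1 y1] .
    show ?thesis
      apply (rule exI[of _ Qp], rule exI[of _ y1], rule exI[of _ l])
      apply (intro conjI)
         apply (rule Qp0)
        apply (rule Qq)
       apply (rule A)
      apply (rule disjI2)
      apply (rule R)
      done
  next
    case False
    then have nz: "\<forall>y\<ge>T0. \<not> int p dvd Wd f a y l" by blast
    have A: "\<forall>n\<ge>1. \<forall>y\<ge>T0 + n * 0. int p ^ n dvd orb f a (y + Qp * p ^ (n - 1)) - orb f a y"
      unfolding Qp_def using spec_na[OF p per1 nz] by simp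
    show ?thesis
      apply (rule exI[of _ Qp], rule exI[of _ T0], rule exI[of _ 0])
      apply (intro conjI)
         apply (rule Qp0)
        apply (rule Qq)
       apply (rule A)
      apply (rule disjI1)
      apply (rule refl)
      done
  qed
qed

lemma dvd_pow_of_primes:
  fixes m b :: nat
  assumes "m > 0" "\<forall>q. prime q \<longrightarrow> q dvd m \<longrightarrow> q dvd b"
  shows "m dvd b ^ m"
  using assms
proof (induction m rule: less_induct)
  case (less m)
  show ?case
  proof (cases "m = 1")
    case True then show ?thesis by simp
  next
    case False
    then obtain q where q: "prime q" "q dvd m" using prime_factor_nat by blast
    then obtain m' where m': "m = q * m'" by (auto elim: dvdE)
    have q2: "q \<ge> 2" using q(1) prime_ge_2_nat by blast
    have m'0: "m' > 0" using less.prems(1) m' by (cases m') auto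
    have lt: "m' < m" using m' q2 m'0 by simp
    have "\<forall>r. prime r \<longrightarrow> r dvd m' \<longrightarrow> r dvd b"
      using less.prems(2) m' by (metis dvd_mult2 mult.commute)
    then have IH: "m' dvd b ^ m'" using less.IH[OF lt m'0] by blast
    have "q dvd b" using less.prems(2) q by blast
    then have "q * m' dvd b * b ^ m'" using IH by (rule mult_dvd_mono)
    then have d: "m dvd b ^ Suc m'" using m' by simp
    have "Suc m' \<le> m" using m' q2 m'0 by (simp add: lt Suc_le_eq)
    then have "b ^ Suc m' dvd b ^ m" by (rule le_imp_power_dvd)
    then show ?thesis using d dvd_trans by blast
  qed
qed

lemma dvd_prod_pow_of_primes:
  fixes m :: nat and S :: "nat set"
  assumes "finite S" "m > 0" "\<forall>q. prime q \<longrightarrow> q dvd m \<longrightarrow> q \<in> S"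
  shows "m dvd (\<Prod>q\<in>S. q ^ m)"
  using assms(2,3)
proof (induction m rule: less_induct)
  case (less m)
  show ?case
  proof (cases "m = 1")
    case True then show ?thesis by simp
  next
    case False
    then obtain q where q: "prime q" "q dvd m" using prime_factor_nat by blast
    then obtain m' where m': "m = q * m'" by (auto elim: dvdE)
    have q2: "q \<ge> 2" using q(1) prime_ge_2_nat by blast
    have m'0: "m' > 0" using less.prems(1) m' by (cases m') auto
    have lt: "m' < m" using m' q2 m'0 by simp
    have "\<forall>r. prime r \<longrightarrow> r dvd m' \<longrightarrow> r \<in> S"
      using less.prems(2) m' by (metis dvd_mult2 mult.commute)
    then have IH: "m' dvd (\<Prod>q\<in>S. q ^ m')" using less.IH[OF lt m'0] by blast
    have "q \<in> S" using less.prems(2) q by blast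
    then have "q dvd (\<Prod>q\<in>S. q)" using assms(1) by (intro dvd_prodI) auto
    then have "q * m' dvd (\<Prod>q\<in>S. q) * (\<Prod>q\<in>S. q ^ m')" using IH by (rule mult_dvd_mono)
    also have "\<dots> = (\<Prod>q\<in>S. q ^ Suc m')" by (simp add: prod.distrib[symmetric])
    finally have d: "m dvd (\<Prod>q\<in>S. q ^ Suc m')" using m' by simp
    have "Suc m' \<le> m" using m' q2 m'0 by (simp add: lt Suc_le_eq)
    then have "(\<Prod>q\<in>S. q ^ Suc m') dvd (\<Prod>q\<in>S. q ^ m)"
      by (intro prod_dvd_prod le_imp_power_dvd)
    then show ?thesis using d dvd_trans by blast
  qed
qed

lemma squarefree_combine:
  fixes b :: nat and z :: int
  assumes "squarefree b" "b > 0" "\<forall>p. prime p \<longrightarrow> p dvd b \<longrightarrow> int p ^ n dvd z"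
  shows "int b ^ n dvd z"
  using assms
proof (induction b rule: less_induct)
  case (less b)
  show ?case
  proof (cases "b = 1")
    case True then show ?thesis by simp
  next
    case False
    then obtain p where p: "prime p" "p dvd b" using prime_factor_nat by blast
    then obtain c where c: "b = p * c" by (auto elim: dvdE)
    have p2: "p \<ge> 2" using p(1) prime_ge_2_nat by blast
    have c0: "c > 0" using less.prems(2) c by (cases c) auto
    have lt: "c < b" using c p2 c0 by simp
    have npc: "\<not> p dvd c"
    proof
      assume "p dvd c"
      then have "p ^ 2 dvd b" using c by (auto simp: power2_eq_square)
      then have "p dvd 1" using squarefreeD[OF less.prems(1)] by blast
      then show False using p(1) by simp
    qed
    have sc: "squarefree c" using squarefree_mono[OF _ less.prems(1)] c by simp
    have "\<forall>r. prime r \<longrightarrow> r dvd c \<longrightarrow> int r ^ n dvd z"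
      using less.prems(3) c by (metis dvd_mult2 mult.commute)
    then have IH: "int c ^ n dvd z" using less.IH[OF lt sc c0] by blast
    have pz: "int p ^ n dvd z" using less.prems(3) p by blast
    have "coprime p c" using prime_imp_coprime[OF p(1) npc] .
    then have "coprime (int p) (int c)" by simp
    then have "coprime (int p ^ n) (int c ^ n)" by simp
    then have "int p ^ n * int c ^ n dvd z" using divides_mult[OF pz IH] by blast
    then show ?thesis using c by (simp add: power_mult_distrib)
  qed
qed

lemma prod_pow_dvd:
  fixes S :: "nat set" and z :: int
  assumes "finite S" "\<forall>p\<in>S. prime p" "\<forall>p\<in>S. int p ^ K dvd z"
  shows "int (\<Prod>p\<in>S. p ^ K) dvd z"
  using assms
proof (induction S rule: finite_induct)
  case empty then show ?case by simp
next
  case (insert x F)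
  have IH: "int (\<Prod>p\<in>F. p ^ K) dvd z" using insert by blast
  have xz: "int x ^ K dvd z" using insert by blast
  have "coprime x (\<Prod>p\<in>F. p ^ K)"
  proof (rule prod_coprime_right)
    fix p assume "p \<in> F"
    then have "coprime x p" using insert primes_coprime by (metis insertCI)
    then show "coprime x (p ^ K)" by simp
  qed
  then have c: "coprime (int x) (int (\<Prod>p\<in>F. p ^ K))" by (simp only: coprime_int_iff)
  then have "coprime (int x ^ K) (int (\<Prod>p\<in>F. p ^ K))" using coprime_power_left_iff by blast
  then have "int x ^ K * int (\<Prod>p\<in>F. p ^ K) dvd z" using divides_mult[OF xz IH] by blast
  then show ?case using insert by simp
qed

lemma poly_exp_eventually:
  fixes A C :: real and d :: nat
  shows "\<exists>N. \<forall>n\<ge>N. A * (C * real n) ^ d < 2 ^ n"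
proof -
  have l1: "((\<lambda>x::real. x ^ d / exp x) \<longlongrightarrow> 0) at_top" by (rule tendsto_power_div_exp_0)
  have l2: "filterlim (\<lambda>n::nat. ln 2 * real n) at_top sequentially"
    by (rule filterlim_tendsto_pos_mult_at_top[OF tendsto_const _ filterlim_real_sequentially]) simp
  have l3: "((\<lambda>n::nat. (ln 2 * real n) ^ d / exp (ln 2 * real n)) \<longlongrightarrow> 0) sequentially"
    using filterlim_compose[OF l1 l2] by simp
  have e: "exp (ln 2 * real n) = 2 ^ n" for n :: nat
  proof -
    have "exp (real n * ln (2::real)) = exp (ln 2) ^ n" by (rule exp_of_nat_mult)
    then show ?thesis by (simp add: mult.commute)
  qed
  have l4: "((\<lambda>n::nat. (ln 2 * real n) ^ d / 2 ^ n) \<longlongrightarrow> 0) sequentially"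
    using l3 by (simp add: e)
  define K where "K = A * (C / ln 2) ^ d"
  have l5: "((\<lambda>n::nat. K * ((ln 2 * real n) ^ d / 2 ^ n)) \<longlongrightarrow> 0) sequentially"
    using tendsto_mult[OF tendsto_const[of K] l4] by simp
  have eq: "K * ((ln 2 * real n) ^ d / 2 ^ n) = A * (C * real n) ^ d / 2 ^ n" for n :: nat
  proof -
    have "(C / ln 2) ^ d * (ln 2 * real n) ^ d = (C * real n) ^ d"
      by (simp add: power_mult_distrib[symmetric])
    then show ?thesis by (simp add: K_def)
  qed
  have "eventually (\<lambda>n. K * ((ln 2 * real n) ^ d / 2 ^ n) < 1) sequentially"
    using order_tendstoD(2)[OF l5, of 1] by simp
  then obtain N where N: "\<forall>n\<ge>N. A * (C * real n) ^ d / 2 ^ n < 1"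
    unfolding eventually_sequentially eq by blast
  show ?thesis
  proof (intro exI allI impI)
    fix n assume "n \<ge> N"
    then have "A * (C * real n) ^ d / 2 ^ n < 1" using N by blast
    then show "A * (C * real n) ^ d < 2 ^ n" by (simp add: divide_less_eq)
  qed
qed

lemma poly_bound:
  fixes R :: "int poly" and x :: int
  assumes "x \<ge> 0"
  shows "\<bar>poly R x\<bar> \<le> (\<Sum>i\<le>Polynomial.degree R. \<bar>Polynomial.coeff R i\<bar>) * (x + 1) ^ Polynomial.degree R"
proof -
  have "\<bar>poly R x\<bar> = \<bar>\<Sum>i\<le>Polynomial.degree R. Polynomial.coeff R i * x ^ i\<bar>" by (simp add: poly_altdef)
  also have "\<dots> \<le> (\<Sum>i\<le>Polynomial.degree R. \<bar>Polynomial.coeff R i * x ^ i\<bar>)" by (rule sum_abs)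
  also have "\<dots> \<le> (\<Sum>i\<le>Polynomial.degree R. \<bar>Polynomial.coeff R i\<bar> * (x + 1) ^ Polynomial.degree R)"
  proof (rule sum_mono)
    fix i assume i: "i \<in> {..Polynomial.degree R}"
    have "x ^ i \<le> (x + 1) ^ i" using assms by (intro power_mono) auto
    also have "\<dots> \<le> (x + 1) ^ Polynomial.degree R" using assms i by (intro power_increasing) auto
    finally have "\<bar>x ^ i\<bar> \<le> (x + 1) ^ Polynomial.degree R" using assms by simp
    then show "\<bar>Polynomial.coeff R i * x ^ i\<bar> \<le> \<bar>Polynomial.coeff R i\<bar> * (x + 1) ^ Polynomial.degree R"
      by (simp add: abs_mult mult_left_mono)
  qed
  also have "\<dots> = (\<Sum>i\<le>Polynomial.degree R. \<bar>Polynomial.coeff R i\<bar>) * (x + 1) ^ Polynomial.degree R"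
    by (simp add: sum_distrib_right)
  finally show ?thesis .
qed

lemma poly_eventually_small:
  fixes R :: "int poly" and C0 C1 :: nat
  shows "\<exists>N. \<forall>n\<ge>N. \<forall>x::nat. x \<le> C0 + C1 * n \<longrightarrow> \<bar>poly R (int x)\<bar> < 2 ^ n"
proof -
  define S where "S = (\<Sum>i\<le>Polynomial.degree R. \<bar>Polynomial.coeff R i\<bar>)"
  define d where "d = Polynomial.degree R"
  have S0: "S \<ge> 0" by (simp add: S_def sum_nonneg)
  obtain N0 where N0: "\<forall>n\<ge>N0. real_of_int S * (real (C0 + C1 + 1) * real n) ^ d < 2 ^ n"
    using poly_exp_eventually by blast
  show ?thesis
  proof (intro exI[of _ "max N0 1"] allI impI)
    fix n x assume n: "max N0 1 \<le> n" and x: "x \<le> C0 + C1 * n"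
    have n1: "n \<ge> 1" using n by simp
    have b1: "\<bar>poly R (int x)\<bar> \<le> S * (int x + 1) ^ d"
      using poly_bound[of "int x" R] by (simp add: S_def d_def)
    have "x + 1 \<le> (C0 + C1 + 1) * n"
    proof -
      have "C0 \<le> C0 * n" "1 \<le> n" using n1 by simp_all
      then have "x + 1 \<le> C0 * n + C1 * n + n" using x by linarith
      then show ?thesis by (simp add: algebra_simps)
    qed
    then have "real (x + 1) \<le> real ((C0 + C1 + 1) * n)" by (simp only: of_nat_le_iff)
    then have "real x + 1 \<le> real (C0 + C1 + 1) * real n" by (simp add: algebra_simps)
    then have "(real x + 1) ^ d \<le> (real (C0 + C1 + 1) * real n) ^ d" by (intro power_mono) auto
    then have "real_of_int S * (real x + 1) ^ d \<le> real_of_int S * (real (C0 + C1 + 1) * real n) ^ d"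
      using S0 by (intro mult_left_mono) auto
    also have "\<dots> < 2 ^ n" using N0 n by simp
    finally have lt: "real_of_int S * (real x + 1) ^ d < 2 ^ n" .
    have "real_of_int \<bar>poly R (int x)\<bar> \<le> real_of_int (S * (int x + 1) ^ d)"
      using b1 of_int_le_iff by blast
    also have "\<dots> = real_of_int S * (real x + 1) ^ d" by simp
    finally have "real_of_int \<bar>poly R (int x)\<bar> < 2 ^ n" using lt by linarith
    then have "real_of_int \<bar>poly R (int x)\<bar> < real_of_int (2 ^ n)" by simp
    then show "\<bar>poly R (int x)\<bar> < 2 ^ n" by (simp only: of_int_less_iff)
  qed
qed

definition specp :: "int poly \<Rightarrow> int \<Rightarrow> nat \<Rightarrow> nat \<Rightarrow> nat \<Rightarrow> nat \<Rightarrow> nat \<Rightarrow> int poly \<Rightarrow> bool" where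
  "specp f a b p Qp T B R = (Qp > 0 \<and> (\<forall>q. prime q \<longrightarrow> q dvd Qp \<longrightarrow> q < p \<and> q dvd b) \<and>
     (\<forall>n\<ge>1. \<forall>y\<ge>T + n * B. int p ^ n dvd orb f a (y + Qp * p ^ (n - 1)) - orb f a y) \<and>
     (B = 0 \<or> (R \<noteq> 0 \<and> (\<forall>n\<ge>1. \<forall>Y\<ge>T + n * B.
          int p ^ n dvd orb f a Y - int Y \<longrightarrow> int p ^ n dvd poly R (int Y)))))"

lemma prime_spec2:
  fixes p :: nat
  assumes ts: "tower_stable f" and fv: "f_valid f b" and p: "prime p" and pb: "p dvd b"
  shows "\<exists>Qp T B R. specp f a b p Qp T B R"
proof -
  obtain Qp T B where H1: "Qp > 0" and H2: "\<forall>q. prime q \<longrightarrow> q dvd Qp \<longrightarrow> q < p \<and> q dvd b"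
    and H3: "\<forall>n\<ge>1. \<forall>y\<ge>T + n * B. int p ^ n dvd orb f a (y + Qp * p ^ (n - 1)) - orb f a y"
    and H4: "B = 0 \<or> (\<exists>R. R \<noteq> 0 \<and> (\<forall>n\<ge>1. \<forall>Y\<ge>T + n * B.
          int p ^ n dvd orb f a Y - int Y \<longrightarrow> int p ^ n dvd poly R (int Y)))"
    using prime_spec[OF ts fv p pb, of a] by blast
  show ?thesis
  proof (cases "B = 0")
    case True
    have "specp f a b p Qp T B 0" unfolding specp_def using H1 H2 H3 True by blast
    then show ?thesis by blast
  next
    case False
    then obtain R where "R \<noteq> 0 \<and> (\<forall>n\<ge>1. \<forall>Y\<ge>T + n * B.
          int p ^ n dvd orb f a Y - int Y \<longrightarrow> int p ^ n dvd poly R (int Y))" using H4 by blast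
    then have "specp f a b p Qp T B R" unfolding specp_def using H1 H2 H3 by blast
    then show ?thesis by blast
  qed
qed

lemma finite_eventually:
  fixes P :: "'a \<Rightarrow> nat \<Rightarrow> bool"
  assumes "finite S" "\<forall>p\<in>S. \<exists>N. \<forall>n\<ge>N. P p n"
  shows "\<exists>N. \<forall>p\<in>S. \<forall>n\<ge>N. P p n"
  using assms
proof (induction S rule: finite_induct)
  case empty then show ?case by simp
next
  case (insert x F)
  have "\<exists>N. \<forall>n\<ge>N. P x n" using insert.prems by simp
  then obtain N1 where N1: "\<forall>n\<ge>N1. P x n" by blast
  have "\<forall>p\<in>F. \<exists>N. \<forall>n\<ge>N. P p n" using insert.prems by simp
  then have "\<exists>N. \<forall>p\<in>F. \<forall>n\<ge>N. P p n" by (rule insert.IH)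
  then obtain N2 where N2: "\<forall>p\<in>F. \<forall>n\<ge>N2. P p n" by (elim exE)
  show ?case
  proof (rule exI[of _ "max N1 N2"], intro ballI allI impI)
    fix p n assume p: "p \<in> insert x F" and n: "max N1 N2 \<le> n"
    show "P p n"
    proof (cases "p = x")
      case True
      have "N1 \<le> n" using n by simp
      then show ?thesis using N1[rule_format, of n] True by simp
    next
      case False
      then have pF: "p \<in> F" using p by simp
      have "N2 \<le> n" using n by simp
      then show ?thesis using N2[rule_format, OF pF] by simp
    qed
  qed
qed

locale gsetup =
  fixes f :: "int poly" and a :: int and b :: nat and Q T B :: "nat \<Rightarrow> nat" and R :: "nat \<Rightarrow> int poly"
  assumes b0: "b > 0" and sqf: "squarefree b"
    and Qpos: "\<forall>p. prime p \<longrightarrow> p dvd b \<longrightarrow> Q p > 0"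
    and Qpr: "\<forall>p. prime p \<longrightarrow> p dvd b \<longrightarrow> (\<forall>q. prime q \<longrightarrow> q dvd Q p \<longrightarrow> q < p \<and> q dvd b)"
    and per: "\<forall>p. prime p \<longrightarrow> p dvd b \<longrightarrow>
       (\<forall>n\<ge>1. \<forall>y\<ge>T p + n * B p. int p ^ n dvd orb f a (y + Q p * p ^ (n - 1)) - orb f a y)"
    and Rp: "\<forall>p. prime p \<longrightarrow> p dvd b \<longrightarrow> B p = 0 \<or> (R p \<noteq> 0 \<and> (\<forall>n\<ge>1. \<forall>Y\<ge>T p + n * B p.
          int p ^ n dvd orb f a Y - int Y \<longrightarrow> int p ^ n dvd poly (R p) (int Y)))"
begin

definition PF where "PF = {p. prime p \<and> p dvd b}"
definition Tail where "Tail n = (\<Sum>p\<in>PF. T p + n * B p)"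
definition KK where "KK = (\<Prod>p\<in>PF. Q p)"
definition Stable where "Stable n r = (\<forall>y::nat. y \<ge> Tail n \<longrightarrow> [int y = r] (mod int (b ^ n)) \<longrightarrow>
    [orb f a y = int y] (mod int (b ^ n)))"

lemma PF_iff: "p \<in> PF \<longleftrightarrow> prime p \<and> p dvd b" by (simp add: PF_def)

lemma finPF: "finite PF"
proof -
  have "PF \<subseteq> {..b}" using b0 by (auto simp: PF_def dvd_imp_le)
  then show ?thesis using finite_subset by blast
qed

lemma Tail_ge: "p \<in> PF \<Longrightarrow> T p + n * B p \<le> Tail n"
  unfolding Tail_def using finPF by (intro member_le_sum) auto

lemma Tail_mono: "n \<le> m \<Longrightarrow> Tail n \<le> Tail m"
  unfolding Tail_def by (intro sum_mono) (simp add: mult_le_mono1)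

lemma KK_pos: "KK > 0"
  unfolding KK_def using Qpos finPF by (auto simp: PF_def)

lemma Q_dvd_KK: "p \<in> PF \<Longrightarrow> Q p dvd KK"
  unfolding KK_def using finPF by (intro dvd_prodI) auto

lemma Q_le_KK: "p \<in> PF \<Longrightarrow> Q p \<le> KK"
  using Q_dvd_KK KK_pos dvd_imp_le by blast

lemma Q_dvd_bn: assumes "p \<in> PF" "n \<ge> KK" shows "Q p dvd b ^ n"
proof -
  have "Q p dvd b ^ Q p"
    using assms(1) Qpos Qpr by (intro dvd_pow_of_primes) (auto simp: PF_def)
  moreover have "b ^ Q p dvd b ^ n" using Q_le_KK[OF assms(1)] assms(2) by (intro le_imp_power_dvd) simp
  ultimately show ?thesis using dvd_trans by blast
qed

lemma coprime_Qp: assumes "p \<in> PF" shows "coprime (Q p) (p ^ n)"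
proof -
  have "\<not> p dvd Q p" using assms Qpr by (auto simp: PF_def)
  then have "coprime p (Q p)" using prime_imp_coprime assms by (auto simp: PF_def)
  then show ?thesis by (simp add: coprime_commute)
qed

lemma per_big: assumes "p \<in> PF" "n \<ge> KK" shows "Q p * p ^ n dvd b ^ n"
proof -
  have "p ^ n dvd b ^ n" using assms(1) by (simp add: PF_def dvd_power_same)
  then show ?thesis using divides_mult[OF Q_dvd_bn[OF assms] _ coprime_Qp[OF assms(1)]] by blast
qed

lemma combine: assumes "\<forall>p\<in>PF. int p ^ n dvd z" shows "int (b ^ n) dvd z"
  using squarefree_combine[OF sqf b0, of n z] assms by (simp add: PF_def)

lemma per_at: "p \<in> PF \<Longrightarrow> n \<ge> 1 \<Longrightarrow> \<forall>y\<ge>T p + n * B p. int p ^ n dvd orb f a (y + Q p * p ^ (n - 1)) - orb f a y"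
  using per by (simp add: PF_def)

lemma lift:
  assumes n: "n \<ge> KK" and st: "Stable n r"
  shows "\<exists>r'. [r' = r] (mod int (b ^ n)) \<and> Stable (Suc n) r'"
proof -
  define Y where "Y = nat (r mod int (b ^ n)) + b ^ n * Tail (Suc n)"
  have bn: "b ^ n > 0" using b0 by simp
  have "1 * Tail (Suc n) \<le> b ^ n * Tail (Suc n)" using bn by (intro mult_le_mono1) linarith
  then have YT: "Y \<ge> Tail (Suc n)" unfolding Y_def by (simp only: mult_1)
  have YTn: "Y \<ge> Tail n" using YT Tail_mono[of n "Suc n"] by simp
  have Yr: "[int Y = r] (mod int (b ^ n))"
    using bn by (simp add: Y_def cong_def)
  have gY: "[orb f a Y = int Y] (mod int (b ^ n))" using st YTn Yr by (simp add: Stable_def)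
  have r'r: "[orb f a Y = r] (mod int (b ^ n))" using cong_trans[OF gY Yr] .
  have "Stable (Suc n) (orb f a Y)"
    unfolding Stable_def
  proof (intro allI impI)
    fix y assume y: "y \<ge> Tail (Suc n)" and yc: "[int y = orb f a Y] (mod int (b ^ Suc n))"
    have "[int y = orb f a Y] (mod int (b ^ n))"
      using yc by (rule cong_dvd_modulus) (simp add: le_imp_power_dvd)
    then have "[int y = int Y] (mod int (b ^ n))" using cong_trans[OF _ gY] by blast
    then have yYn: "[y = Y] (mod b ^ n)" by (metis cong_int_iff)
    have "\<forall>p\<in>PF. int p ^ Suc n dvd orb f a y - int y"
    proof
      fix p assume p: "p \<in> PF"
      have "[y = Y] (mod Q p * p ^ (Suc n - 1))"
        using cong_dvd_modulus_nat[OF yYn per_big[OF p n]] by simp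
      then have d1: "int p ^ Suc n dvd orb f a y - orb f a Y"
        using per_mult_cong[OF per_at[OF p, of "Suc n"]] Tail_ge[OF p, of "Suc n"] y YT by simp
      have "int p dvd int b" using p by (simp add: PF_def)
      then have "int p ^ Suc n dvd int b ^ Suc n" by (rule dvd_power_same)
      then have "int p ^ Suc n dvd int (b ^ Suc n)" by (simp only: of_nat_power)
      then have d2: "int p ^ Suc n dvd int y - orb f a Y"
        using yc by (simp add: cong_iff_dvd_diff dvd_trans)
      have "orb f a y - int y = (orb f a y - orb f a Y) - (int y - orb f a Y)" by simp
      then show "int p ^ Suc n dvd orb f a y - int y" using d1 d2 by (metis dvd_diff)
    qed
    then have "int (b ^ Suc n) dvd orb f a y - int y" by (rule combine)
    then show "[orb f a y = int y] (mod int (b ^ Suc n))" by (simp add: cong_iff_dvd_diff)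
  qed
  then show ?thesis using r'r by blast
qed


definition Mu where "Mu u = (\<Prod>q\<in>PF \<inter> {..<u}. q ^ KK)"

lemma Mu_pos: "Mu u > 0"
  unfolding Mu_def using finPF by (auto simp: PF_def prime_gt_0_nat intro!: prod_pos)

lemma Mu_coprime: assumes "p \<in> PF" shows "coprime (Mu p) (p ^ n)"
proof -
  have "coprime (Mu p) p"
    unfolding Mu_def
  proof (rule prod_coprime_left)
    fix q assume q: "q \<in> PF \<inter> {..<p}"
    then have "coprime q p" using assms primes_coprime[of q p] by (auto simp: PF_def)
    then show "coprime (q ^ KK) p" by simp
  qed
  then show ?thesis by simp
qed

lemma Q_dvd_Mu: assumes "p \<in> PF" shows "Q p dvd Mu p"
proof -
  have fS: "finite (PF \<inter> {..<p})" using finPF by simp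
  have "Q p dvd (\<Prod>q\<in>PF \<inter> {..<p}. q ^ Q p)"
    using assms Qpos Qpr by (intro dvd_prod_pow_of_primes[OF fS]) (auto simp: PF_def)
  moreover have "(\<Prod>q\<in>PF \<inter> {..<p}. q ^ Q p) dvd Mu p"
    unfolding Mu_def using Q_le_KK[OF assms] by (intro prod_dvd_prod le_imp_power_dvd)
  ultimately show ?thesis using dvd_trans by blast
qed

lemma cong_coprime_combine:
  fixes x y :: int
  assumes "[x = y] (mod m1)" "[x = y] (mod m2)" "coprime m1 m2"
  shows "[x = y] (mod m1 * m2)"
  using assms divides_mult by (simp add: cong_iff_dvd_diff)

lemma inner_step:
  assumes p: "p \<in> PF" and k: "Suc k \<le> KK"
    and IH: "\<forall>y\<ge>Tail KK. [int y = s] (mod int (Mu p * p ^ k)) \<longrightarrow>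
              [int y = r] (mod int (Mu p)) \<and> int p ^ k dvd orb f a y - int y"
  shows "\<exists>s'. \<forall>y\<ge>Tail KK. [int y = s'] (mod int (Mu p * p ^ Suc k)) \<longrightarrow>
              [int y = r] (mod int (Mu p)) \<and> int p ^ Suc k dvd orb f a y - int y"
proof -
  define N where "N = Mu p * p ^ k"
  have pp: "prime p" using p by (simp add: PF_def)
  have N0: "N > 0" using Mu_pos pp by (simp add: N_def prime_gt_0_nat)
  define y0 where "y0 = nat (s mod int N) + N * Tail KK"
  have "1 * Tail KK \<le> N * Tail KK" using N0 by (intro mult_le_mono1) linarith
  then have y0T: "y0 \<ge> Tail KK" unfolding y0_def by (simp only: mult_1)
  have y0s: "[int y0 = s] (mod int N)" using N0 by (simp add: y0_def cong_def)
  have IHy0: "[int y0 = r] (mod int (Mu p))" "int p ^ k dvd orb f a y0 - int y0"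
    using IH y0T y0s by (auto simp: N_def)
  define v where "v = orb f a y0"
  have cop: "coprime (int (Mu p)) (int p ^ Suc k)"
    using Mu_coprime[OF p, of "Suc k"] by (simp only: coprime_int_iff of_nat_power[symmetric])
  obtain s' where s': "[s' = s] (mod int (Mu p))" "[s' = v] (mod int p ^ Suc k)"
    using binary_chinese_remainder_int[OF cop] by blast
  have "\<forall>y\<ge>Tail KK. [int y = s'] (mod int (Mu p * p ^ Suc k)) \<longrightarrow>
              [int y = r] (mod int (Mu p)) \<and> int p ^ Suc k dvd orb f a y - int y"
  proof (intro allI impI)
    fix y assume yT: "y \<ge> Tail KK" and ys': "[int y = s'] (mod int (Mu p * p ^ Suc k))"
    have c1: "[int y = s'] (mod int (Mu p))" using ys' by (rule cong_dvd_modulus) simp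
    have c2: "[int y = s'] (mod int p ^ Suc k)" using ys' by (rule cong_dvd_modulus) simp
    have ysM: "[int y = s] (mod int (Mu p))" using cong_trans[OF c1 s'(1)] .
    have yv: "[int y = v] (mod int p ^ Suc k)" using cong_trans[OF c2 s'(2)] .
    have yvk: "[int y = v] (mod int p ^ k)" using yv by (rule cong_dvd_modulus) (simp add: le_imp_power_dvd)
    have vy0: "[v = int y0] (mod int p ^ k)" using IHy0(2) by (simp add: v_def cong_iff_dvd_diff)
    have y0sk: "[int y0 = s] (mod int p ^ k)" using y0s by (rule cong_dvd_modulus) (simp add: N_def)
    have ysk: "[int y = s] (mod int p ^ k)" using cong_trans[OF cong_trans[OF yvk vy0] y0sk] .
    have copk: "coprime (int (Mu p)) (int p ^ k)"
      using Mu_coprime[OF p, of k] by (simp only: coprime_int_iff of_nat_power[symmetric])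
    have ysN: "[int y = s] (mod int (Mu p * p ^ k))"
      using cong_coprime_combine[OF ysM ysk copk] by simp
    then have res1: "[int y = r] (mod int (Mu p))" using IH yT by blast
    have "[int y = int y0] (mod int N)" using cong_trans[OF ysN[folded N_def] cong_sym[OF y0s]] .
    then have "[y = y0] (mod N)" by (metis cong_int_iff)
    moreover have "Q p * p ^ (Suc k - 1) dvd N"
      using Q_dvd_Mu[OF p] by (simp add: N_def mult_dvd_mono)
    ultimately have yy0: "[y = y0] (mod Q p * p ^ (Suc k - 1))" by (rule cong_dvd_modulus_nat)
    have TT: "T p + Suc k * B p \<le> Tail KK"
      using Tail_ge[OF p, of "Suc k"] Tail_mono[OF k] by simp
    have d1: "int p ^ Suc k dvd orb f a y - orb f a y0"
      using per_mult_cong[OF per_at[OF p, of "Suc k"] _ _ yy0] TT yT y0T by simp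
    have d2: "int p ^ Suc k dvd int y - v" using yv by (simp add: cong_iff_dvd_diff)
    have "orb f a y - int y = (orb f a y - orb f a y0) - (int y - v)" by (simp add: v_def)
    then have "int p ^ Suc k dvd orb f a y - int y" using d1 d2 by (metis dvd_diff)
    then show "[int y = r] (mod int (Mu p)) \<and> int p ^ Suc k dvd orb f a y - int y"
      using res1 by blast
  qed
  then show ?thesis by blast
qed


lemma inner_all:
  assumes p: "p \<in> PF"
    and IH: "\<forall>y\<ge>Tail KK. [int y = r] (mod int (Mu p)) \<longrightarrow> (\<forall>q\<in>PF. q < p \<longrightarrow> int q ^ KK dvd orb f a y - int y)"
  shows "k \<le> KK \<Longrightarrow> \<exists>s. \<forall>y\<ge>Tail KK. [int y = s] (mod int (Mu p * p ^ k)) \<longrightarrow>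
              [int y = r] (mod int (Mu p)) \<and> int p ^ k dvd orb f a y - int y"
proof (induction k)
  case 0
  show ?case by (rule exI[of _ r]) simp
next
  case (Suc k)
  then obtain s where "\<forall>y\<ge>Tail KK. [int y = s] (mod int (Mu p * p ^ k)) \<longrightarrow>
              [int y = r] (mod int (Mu p)) \<and> int p ^ k dvd orb f a y - int y" by auto
  then show ?case using inner_step[OF p Suc.prems] by blast
qed

lemma outer:
  "\<exists>r. \<forall>y\<ge>Tail KK. [int y = r] (mod int (Mu u)) \<longrightarrow> (\<forall>q\<in>PF. q < u \<longrightarrow> int q ^ KK dvd orb f a y - int y)"
proof (induction u)
  case 0
  show ?case by (rule exI[of _ 0]) simp
next
  case (Suc u)
  then obtain r where r: "\<forall>y\<ge>Tail KK. [int y = r] (mod int (Mu u)) \<longrightarrow>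
      (\<forall>q\<in>PF. q < u \<longrightarrow> int q ^ KK dvd orb f a y - int y)" by blast
  show ?case
  proof (cases "u \<in> PF")
    case False
    have "PF \<inter> {..<Suc u} = PF \<inter> {..<u}" using False by (auto simp: less_Suc_eq)
    then have M: "Mu (Suc u) = Mu u" by (simp add: Mu_def)
    have "\<forall>y\<ge>Tail KK. [int y = r] (mod int (Mu (Suc u))) \<longrightarrow>
      (\<forall>q\<in>PF. q < Suc u \<longrightarrow> int q ^ KK dvd orb f a y - int y)"
      using r M False by (metis less_Suc_eq)
    then show ?thesis by blast
  next
    case True
    have "PF \<inter> {..<Suc u} = insert u (PF \<inter> {..<u})" using True by (auto simp: less_Suc_eq)
    then have M: "Mu (Suc u) = Mu u * u ^ KK"
      using finPF by (simp add: Mu_def mult.commute)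
    obtain s where s: "\<forall>y\<ge>Tail KK. [int y = s] (mod int (Mu u * u ^ KK)) \<longrightarrow>
              [int y = r] (mod int (Mu u)) \<and> int u ^ KK dvd orb f a y - int y"
      using inner_all[OF True r, of KK] by blast
    have "\<forall>y\<ge>Tail KK. [int y = s] (mod int (Mu (Suc u))) \<longrightarrow>
      (\<forall>q\<in>PF. q < Suc u \<longrightarrow> int q ^ KK dvd orb f a y - int y)"
    proof (intro allI impI ballI)
      fix y q assume y: "y \<ge> Tail KK" "[int y = s] (mod int (Mu (Suc u)))" and q: "q \<in> PF" "q < Suc u"
      have sy: "[int y = r] (mod int (Mu u)) \<and> int u ^ KK dvd orb f a y - int y"
        using s y M by simp
      show "int q ^ KK dvd orb f a y - int y"
      proof (cases "q = u")
        case True then show ?thesis using sy by simp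
      next
        case False
        then have "q < u" using q by simp
        then show ?thesis using r y(1) sy q(1) by blast
      qed
    qed
    then show ?thesis by blast
  qed
qed

lemma base: "\<exists>r. Stable KK r"
proof -
  obtain r where r: "\<forall>y\<ge>Tail KK. [int y = r] (mod int (Mu (Suc b))) \<longrightarrow>
      (\<forall>q\<in>PF. q < Suc b \<longrightarrow> int q ^ KK dvd orb f a y - int y)"
    using outer by blast
  have PFb: "PF \<inter> {..<Suc b} = PF" using b0 by (auto simp: PF_def dvd_imp_le less_Suc_eq_le)
  have Mdvd: "int (Mu (Suc b)) dvd int (b ^ KK)"
    unfolding Mu_def PFb
  proof (rule prod_pow_dvd[OF finPF])
    show "\<forall>p\<in>PF. prime p" by (simp add: PF_def)
    show "\<forall>p\<in>PF. int p ^ KK dvd int (b ^ KK)"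
      by (auto simp: PF_def dvd_power_same simp flip: of_nat_power)
  qed
  have "Stable KK r"
    unfolding Stable_def
  proof (intro allI impI)
    fix y assume y: "Tail KK \<le> y" "[int y = r] (mod int (b ^ KK))"
    have "[int y = r] (mod int (Mu (Suc b)))" using y(2) Mdvd by (rule cong_dvd_modulus)
    then have "\<forall>q\<in>PF. int q ^ KK dvd orb f a y - int y"
      using r y(1) PFb by (auto simp: PF_def dvd_imp_le b0 less_Suc_eq_le)
    then have "int (b ^ KK) dvd orb f a y - int y" by (rule combine)
    then show "[orb f a y = int y] (mod int (b ^ KK))" by (simp add: cong_iff_dvd_diff)
  qed
  then show ?thesis by blast
qed


lemma Tail_lin: "Tail n = (\<Sum>p\<in>PF. T p) + (\<Sum>p\<in>PF. B p) * n"
proof -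
  have "Tail n = (\<Sum>p\<in>PF. T p) + (\<Sum>p\<in>PF. n * B p)" by (simp add: Tail_def sum.distrib)
  also have "(\<Sum>p\<in>PF. n * B p) = n * (\<Sum>p\<in>PF. B p)" by (rule sum_distrib_left[symmetric])
  finally show ?thesis by (simp add: mult.commute)
qed

lemma main_seq:
  "\<exists>x :: nat \<Rightarrow> nat.
           (\<forall>n\<ge>1. x n > 0 \<and> [(poly f ^^ x n) a = int (x n)] (mod int (b ^ n))) \<and>
           (\<forall>n\<ge>2. \<exists>c::int. 0 \<le> c \<and> c < int b \<and>
                    int (x n) = c * int b ^ (n - 1) + int (x (n - 1)))"
proof -
  obtain r0 where r0: "Stable KK r0" using base by blast
  define \<sigma> where "\<sigma> = rec_nat r0 (\<lambda>j r. SOME r'. [r' = r] (mod int (b ^ (KK + j))) \<and> Stable (Suc (KK + j)) r')"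
  have \<sigma>0: "\<sigma> 0 = r0" by (simp add: \<sigma>_def)
  have \<sigma>S: "\<sigma> (Suc j) = (SOME r'. [r' = \<sigma> j] (mod int (b ^ (KK + j))) \<and> Stable (Suc (KK + j)) r')" for j
    by (simp add: \<sigma>_def)
  have \<sigma>st: "Stable (KK + j) (\<sigma> j) \<and> [\<sigma> (Suc j) = \<sigma> j] (mod int (b ^ (KK + j)))" for j
  proof (induction j)
    case 0
    have "\<exists>r'. [r' = \<sigma> 0] (mod int (b ^ (KK + 0))) \<and> Stable (Suc (KK + 0)) r'"
      using lift[of KK r0] r0 \<sigma>0 by simp
    then have "[\<sigma> (Suc 0) = \<sigma> 0] (mod int (b ^ (KK + 0))) \<and> Stable (Suc (KK + 0)) (\<sigma> (Suc 0))"
      unfolding \<sigma>S by (rule someI_ex)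
    then show ?case using r0 \<sigma>0 by simp
  next
    case (Suc j)
    have stj: "Stable (KK + j) (\<sigma> j)" using Suc by blast
    have "\<exists>r'. [r' = \<sigma> j] (mod int (b ^ (KK + j))) \<and> Stable (Suc (KK + j)) r'"
      using lift[of "KK + j" "\<sigma> j"] stj by simp
    then have h1: "[\<sigma> (Suc j) = \<sigma> j] (mod int (b ^ (KK + j))) \<and> Stable (Suc (KK + j)) (\<sigma> (Suc j))"
      unfolding \<sigma>S by (rule someI_ex)
    then have st1: "Stable (KK + Suc j) (\<sigma> (Suc j))" by simp
    have "\<exists>r'. [r' = \<sigma> (Suc j)] (mod int (b ^ (KK + Suc j))) \<and> Stable (Suc (KK + Suc j)) r'"
      using lift[of "KK + Suc j" "\<sigma> (Suc j)"] st1 by simp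
    then have "[\<sigma> (Suc (Suc j)) = \<sigma> (Suc j)] (mod int (b ^ (KK + Suc j))) \<and> Stable (Suc (KK + Suc j)) (\<sigma> (Suc (Suc j)))"
      unfolding \<sigma>S[of "Suc j"] by (rule someI_ex)
    then show ?case using st1 by blast
  qed
  have \<sigma>cong: "[\<sigma> j' = \<sigma> j] (mod int (b ^ (KK + j)))" if "j \<le> j'" for j j'
    using that
  proof (induction j' rule: dec_induct)
    case base then show ?case by simp
  next
    case (step m)
    have "[\<sigma> (Suc m) = \<sigma> m] (mod int (b ^ (KK + m)))" using \<sigma>st by blast
    then have "[\<sigma> (Suc m) = \<sigma> m] (mod int (b ^ (KK + j)))"
      by (rule cong_dvd_modulus) (use step.hyps in \<open>simp add: le_imp_power_dvd flip: of_nat_power\<close>)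
    then show ?case using cong_trans[OF _ step.IH] by blast
  qed
  define \<rho> where "\<rho> n = \<sigma> (n - KK)" for n
  have \<rho>st: "Stable n (\<rho> n)" if "n \<ge> KK" for n
    using \<sigma>st[of "n - KK"] that by (simp add: \<rho>_def)
  have \<rho>cong: "[\<rho> m = \<rho> n] (mod int (b ^ n))" if "n \<le> m" for n m
  proof -
    have "[\<sigma> (m - KK) = \<sigma> (n - KK)] (mod int (b ^ (KK + (n - KK))))"
      using \<sigma>cong that by simp
    moreover have "int (b ^ n) dvd int (b ^ (KK + (n - KK)))"
      by (simp add: le_imp_power_dvd flip: of_nat_power)
    ultimately show ?thesis unfolding \<rho>_def by (rule cong_dvd_modulus)
  qed
  have \<rho>small: "\<rho> n = r0" if "n \<le> KK" for n using that \<sigma>0 by (simp add: \<rho>_def)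
  define PA where "PA = {p\<in>PF. B p > 0}"
  have finPA: "finite PA" using finPF by (simp add: PA_def)
  have RPA: "\<forall>p\<in>PA. R p \<noteq> 0 \<and> (\<forall>n\<ge>1. \<forall>Y\<ge>T p + n * B p.
          int p ^ n dvd orb f a Y - int Y \<longrightarrow> int p ^ n dvd poly (R p) (int Y))"
    using Rp by (auto simp: PA_def PF_def)
  define C0 where "C0 = (\<Sum>p\<in>PF. T p)"
  define C1 where "C1 = (\<Sum>p\<in>PF. B p)"
  have TailC: "Tail n = C0 + C1 * n" for n by (simp add: Tail_lin C0_def C1_def)
  have evs: "\<forall>p\<in>PA. \<exists>N. \<forall>n\<ge>N. \<forall>x::nat. x \<le> C0 + C1 * n \<longrightarrow> \<bar>poly (R p) (int x)\<bar> < 2 ^ n"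
    using poly_eventually_small by blast
  obtain N1 where N1: "\<forall>p\<in>PA. \<forall>n\<ge>N1. \<forall>x::nat. x \<le> C0 + C1 * n \<longrightarrow> \<bar>poly (R p) (int x)\<bar> < 2 ^ n"
    using finite_eventually[OF finPA evs] by blast
  have rootsb: "\<forall>p\<in>PA. \<exists>N. \<forall>n\<ge>N. \<forall>x::nat. poly (R p) (int x) = 0 \<longrightarrow> x < n"
  proof
    fix p assume "p \<in> PA"
    then have "R p \<noteq> 0" using RPA by blast
    then have "finite {y. poly (R p) y = 0}" by (rule poly_roots_finite)
    then have "finite (int -` {y. poly (R p) y = 0})" by (rule finite_vimageI) (simp add: inj_def)
    then obtain k where "int -` {y. poly (R p) y = 0} \<subseteq> {..<k}" using finite_nat_bounded by blast
    then show "\<exists>N. \<forall>n\<ge>N. \<forall>x::nat. poly (R p) (int x) = 0 \<longrightarrow> x < n"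
      by (intro exI[of _ k]) auto
  qed
  obtain Z where Z: "\<forall>p\<in>PA. \<forall>n\<ge>Z. \<forall>x::nat. poly (R p) (int x) = 0 \<longrightarrow> x < n"
    using finite_eventually[OF finPA rootsb] by blast
  define W where "W = Tail (N1 + KK) + Z + 1"
  define X where "X = nat (r0 mod int (b ^ KK)) + b ^ KK * W"
  have bK: "b ^ KK > 0" using b0 by simp
  have "1 * W \<le> b ^ KK * W" using bK by (intro mult_le_mono1) linarith
  then have XW: "X \<ge> W" unfolding X_def by (simp only: mult_1)
  have Xr0: "[int X = r0] (mod int (b ^ KK))" using bK by (simp add: X_def cong_def)
  define u where "u n = (\<rho> n - int X) mod int (b ^ n)" for n
  define x where "x n = nat (int X + u n)" for n
  have u0: "u n \<ge> 0" "u n < int (b ^ n)" for n using b0 by (simp_all add: u_def)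
  have xu: "int (x n) = int X + u n" for n using u0 by (simp add: x_def)
  have xX: "x n \<ge> X" for n using xu[of n] u0[of n] by simp
  have xrho: "[int (x n) = \<rho> n] (mod int (b ^ n))" for n
    by (simp add: xu u_def cong_def mod_add_right_eq)
  have pos: "x n > 0" for n using xX[of n] XW by (simp add: W_def)
  have chain: "\<exists>c::int. 0 \<le> c \<and> c < int b \<and> int (x n) = c * int b ^ (n - 1) + int (x (n - 1))"
    if "n \<ge> 2" for n
  proof -
    define m where "m = n - 1"
    have nm: "n = Suc m" using that by (simp add: m_def)
    have "[\<rho> n = \<rho> m] (mod int (b ^ m))" using \<rho>cong[of m n] nm by simp
    then have "[\<rho> n - int X = \<rho> m - int X] (mod int (b ^ m))" by (rule cong_diff) simp
    then have um: "(\<rho> n - int X) mod int (b ^ m) = u m" by (simp add: u_def cong_def)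
    define c where "c = (\<rho> n - int X) div int (b ^ m) mod int b"
    have "u n = (\<rho> n - int X) mod (int (b ^ m) * int b)" by (simp add: u_def nm mult.commute)
    also have "\<dots> = int (b ^ m) * c + (\<rho> n - int X) mod int (b ^ m)"
      unfolding c_def by (rule zmod_zmult2_eq) simp
    finally have "u n = int (b ^ m) * c + u m" using um by simp
    then have "int (x n) = c * int b ^ (n - 1) + int (x (n - 1))"
      using xu[of n] xu[of m] by (simp add: m_def algebra_simps)
    moreover have "0 \<le> c" "c < int b" using b0 by (simp_all add: c_def)
    ultimately show ?thesis by blast
  qed
  have congr: "[(poly f ^^ x n) a = int (x n)] (mod int (b ^ n))" if n1: "n \<ge> 1" for n
  proof (cases "n \<le> KK")
    case True
    have "[\<rho> n - int X = r0 - r0] (mod int (b ^ n))"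
    proof (rule cong_diff)
      show "[\<rho> n = r0] (mod int (b ^ n))" using \<rho>small[OF True] by simp
      show "[int X = r0] (mod int (b ^ n))" using Xr0
        by (rule cong_dvd_modulus) (use True in \<open>simp add: le_imp_power_dvd flip: of_nat_power\<close>)
    qed
    then have "u n = 0" by (simp add: u_def cong_def)
    then have xn: "x n = X" by (simp add: x_def)
    have XT: "X \<ge> Tail KK" using XW Tail_mono[of KK "N1 + KK"] by (simp add: W_def)
    have "[orb f a X = int X] (mod int (b ^ KK))" using r0 XT Xr0 by (simp add: Stable_def)
    then have "[orb f a X = int X] (mod int (b ^ n))"
      by (rule cong_dvd_modulus) (use True in \<open>simp add: le_imp_power_dvd flip: of_nat_power\<close>)
    then show ?thesis using xn by (simp add: orb_def)
  next
    case False
    then have nK: "n \<ge> KK" by simp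
    have st: "Stable n (\<rho> n)" using \<rho>st[OF nK] .
    have big: "x n \<ge> Tail n"
    proof (rule ccontr)
      assume "\<not> x n \<ge> Tail n"
      then have lt: "x n < Tail n" by simp
      have XT: "X \<ge> Tail (N1 + KK)" using XW by (simp add: W_def)
      have nN: "n \<ge> N1"
      proof (rule ccontr)
        assume "\<not> n \<ge> N1"
        then have "Tail n \<le> Tail (N1 + KK)" by (intro Tail_mono) simp
        then show False using lt xX[of n] XT by simp
      qed
      have "\<exists>p\<in>PF. B p > 0"
      proof (rule ccontr)
        assume "\<not> (\<exists>p\<in>PF. B p > 0)"
        then have "C1 = 0" by (simp add: C1_def)
        then have "Tail n \<le> Tail (N1 + KK)" using TailC by simp
        then show False using lt xX[of n] XT by simp
      qed
      then obtain p where pPF: "p \<in> PF" and Bp: "B p > 0" by blast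
      have pPA: "p \<in> PA" using pPF Bp by (simp add: PA_def)
      have Rprop: "\<forall>n\<ge>1. \<forall>Y\<ge>T p + n * B p.
          int p ^ n dvd orb f a Y - int Y \<longrightarrow> int p ^ n dvd poly (R p) (int Y)"
        using RPA pPA by blast
      define Y where "Y = x n + b ^ n * Tail n"
      have bn: "b ^ n > 0" using b0 by simp
      have "1 * Tail n \<le> b ^ n * Tail n" using bn by (intro mult_le_mono1) linarith
      then have YT: "Y \<ge> Tail n" unfolding Y_def by (simp only: mult_1)
      have Yx: "[int Y = int (x n)] (mod int (b ^ n))" by (simp add: Y_def cong_def)
      have Yrho: "[int Y = \<rho> n] (mod int (b ^ n))" using cong_trans[OF Yx xrho] .
      have "[orb f a Y = int Y] (mod int (b ^ n))" using st YT Yrho by (simp add: Stable_def)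
      moreover have pb: "int p ^ n dvd int (b ^ n)"
      proof -
        have "int p dvd int b" using pPF by (simp add: PF_def)
        then have "int p ^ n dvd int b ^ n" by (rule dvd_power_same)
        then show ?thesis by (simp only: of_nat_power)
      qed
      ultimately have "int p ^ n dvd orb f a Y - int Y"
        using dvd_trans[OF pb] by (simp add: cong_iff_dvd_diff)
      moreover have "Y \<ge> T p + n * B p" using Tail_ge[OF pPF, of n] YT by simp
      ultimately have d1: "int p ^ n dvd poly (R p) (int Y)" using Rprop n1 by blast
      have "[int Y = int (x n)] (mod int p ^ n)" using Yx pb by (rule cong_dvd_modulus)
      then have "[poly (R p) (int Y) = poly (R p) (int (x n))] (mod int p ^ n)" by (rule poly_cong_int)
      then have d2: "int p ^ n dvd poly (R p) (int (x n))" using d1 by (simp add: cong_dvd_iff)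
      have nz: "poly (R p) (int (x n)) \<noteq> 0"
      proof
        assume "poly (R p) (int (x n)) = 0"
        moreover have "X \<ge> Z" using XW by (simp add: W_def)
        ultimately have "x n < X" using Z pPA by blast
        then show False using xX[of n] by simp
      qed
      have "\<bar>int p ^ n\<bar> \<le> \<bar>poly (R p) (int (x n))\<bar>" using dvd_imp_le_int[OF nz d2] .
      moreover have "(2::int) ^ n \<le> int p ^ n"
        using pPF prime_ge_2_nat by (intro power_mono) (auto simp: PF_def)
      moreover have "\<bar>poly (R p) (int (x n))\<bar> < 2 ^ n"
        using N1 pPA nN lt TailC by simp
      ultimately show False by simp
    qed
    have "[orb f a (x n) = int (x n)] (mod int (b ^ n))" using st big xrho by (simp add: Stable_def)
    then show ?thesis by (simp add: orb_def)
  qed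
  have A: "\<forall>n\<ge>1. x n > 0 \<and> [(poly f ^^ x n) a = int (x n)] (mod int (b ^ n))"
    using pos congr by blast
  have B: "\<forall>n\<ge>2. \<exists>c::int. 0 \<le> c \<and> c < int b \<and> int (x n) = c * int b ^ (n - 1) + int (x (n - 1))"
    using chain by blast
  show ?thesis by (rule exI[of _ x], rule conjI[OF A B])
qed

end


theorem theorem1p5:
  fixes f :: "int poly" and a :: int and b :: nat
  assumes "tower_stable f" and "a > 0" and "b > 0" and "f_valid f b"
  shows "\<exists>x :: nat \<Rightarrow> nat.
           (\<forall>n\<ge>1. x n > 0 \<and> [(poly f ^^ x n) a = int (x n)] (mod int (b ^ n))) \<and>
           (\<forall>n\<ge>2. \<exists>c::int. 0 \<le> c \<and> c < int b \<and>
                    int (x n) = c * int b ^ (n - 1) + int (x (n - 1)))"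
proof -
  have ex: "\<forall>p. \<exists>z :: nat \<times> nat \<times> nat \<times> int poly. prime p \<and> p dvd b \<longrightarrow>
       specp f a b p (fst z) (fst (snd z)) (fst (snd (snd z))) (snd (snd (snd z)))"
  proof
    fix p
    show "\<exists>z :: nat \<times> nat \<times> nat \<times> int poly. prime p \<and> p dvd b \<longrightarrow>
       specp f a b p (fst z) (fst (snd z)) (fst (snd (snd z))) (snd (snd (snd z)))"
    proof (cases "prime p \<and> p dvd b")
      case True
      then obtain Qp T B R where "specp f a b p Qp T B R"
        using prime_spec2[OF assms(1) assms(4), of p a] by blast
      then show ?thesis by (intro exI[of _ "(Qp, T, B, R)"]) simp
    next
      case False then show ?thesis by blast
    qed
  qed
  obtain F where F: "\<forall>p. prime p \<and> p dvd b \<longrightarrow>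
       specp f a b p (fst (F p)) (fst (snd (F p))) (fst (snd (snd (F p)))) (snd (snd (snd (F p))))"
    using choice[OF ex] by blast
  define Q where "Q p = fst (F p)" for p
  define T where "T p = fst (snd (F p))" for p
  define B where "B p = fst (snd (snd (F p)))" for p
  define R where "R p = snd (snd (snd (F p)))" for p
  have F': "specp f a b p (Q p) (T p) (B p) (R p)" if "prime p" "p dvd b" for p
    using F that by (simp add: Q_def T_def B_def R_def)
  have sqf: "squarefree b" using assms(4) by (simp add: f_valid_def)
  interpret G: gsetup f a b Q T B R
  proof
    show "b > 0" using assms(3) .
    show "squarefree b" using sqf .
    show "\<forall>p. prime p \<longrightarrow> p dvd b \<longrightarrow> Q p > 0" using F' by (simp add: specp_def)
    show "\<forall>p. prime p \<longrightarrow> p dvd b \<longrightarrow> (\<forall>q. prime q \<longrightarrow> q dvd Q p \<longrightarrow> q < p \<and> q dvd b)"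
      using F' by (simp add: specp_def)
    show "\<forall>p. prime p \<longrightarrow> p dvd b \<longrightarrow>
       (\<forall>n\<ge>1. \<forall>y\<ge>T p + n * B p. int p ^ n dvd orb f a (y + Q p * p ^ (n - 1)) - orb f a y)"
      using F' by (simp add: specp_def)
    show "\<forall>p. prime p \<longrightarrow> p dvd b \<longrightarrow> B p = 0 \<or> (R p \<noteq> 0 \<and> (\<forall>n\<ge>1. \<forall>Y\<ge>T p + n * B p.
          int p ^ n dvd orb f a Y - int Y \<longrightarrow> int p ^ n dvd poly (R p) (int Y)))"
      using F' by (simp add: specp_def)
  qed
  show ?thesis using G.main_seq .
qed

end
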